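(* Let $\boldsymbol\varphi\in\mathcal{OB}$ and let $g_{\boldsymbol\varphi}$ be a product metric with associated component operators $\mathcal G_{\boldsymbol\varphi,j}:H^1_0(\mathcal D,\mathbb C)\to H^{-1}(\mathcal D,\mathbb C)$. Then $g_{\boldsymbol\varphi}$ is horizontally compatible with the $L$-metric at $\boldsymbol\varphi$, i.e. $\mathcal H^g_{\boldsymbol\varphi}=\mathcal H^L_{\boldsymbol\varphi}$, if and only if for every $j=1,\dots,p$ the function $i\varphi_j$ is an eigenfunction of $\mathcal G_{\boldsymbol\varphi,j}$ on $T_{\varphi_j}\mathcal S_{N_j}$ to a nonzero real eigenvalue, i.e. there is $\varsigma_j\in\mathbb R\setminus\{0\}$ with $\langle\mathcal G_{\boldsymbol\varphi,j}(i\varphi_j),z\rangle=\varsigma_j\,\mathrm{Re}\int_{\mathcal D}i\varphi_j\overline z\,dx$ for all $z\in T_{\varphi_j}\mathcal S_{N_j}$.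
   Context: $\mathcal D\subset\mathbb R^d$ bounded Lipschitz, $d\in\{2,3\}$; $H=[H^1_0(\mathcal D,\mathbb C)]^p$ real Hilbert space, $\langle\cdot,\cdot\rangle$ the real duality pairing between $H^{-1}$ and $H^1_0$. $N_j>0$; $\mathcal S_{N_j}=\{\varphi\in H^1_0(\mathcal D,\mathbb C):\int|\varphi|^2=N_j\}$, $T_{\varphi}\mathcal S_{N_j}=\{z:\mathrm{Re}\int z\overline\varphi=0\}$; $\mathcal{OB}=\mathcal S_{N_1}\times\dots\times\mathcal S_{N_p}$, $T_{\boldsymbol\varphi}\mathcal{OB}=\prod_jT_{\varphi_j}\mathcal S_{N_j}$. Vertical space $\mathcal V_{\boldsymbol\varphi}=\{i\boldsymbol\varphi\Sigma:\Sigma\text{ real diagonal}\}=\{(i\varphi_1\sigma_1,\dots,i\varphi_p\sigma_p):\sigma_j\in\mathbb R\}$. For a Riemannian metric $g_{\boldsymbol\varphi}$ (an inner product on $T_{\boldsymbol\varphi}\mathcal{OB}$), $\mathcal H^g_{\boldsymbol\varphi}=\{\boldsymbol\xi\in T_{\boldsymbol\varphi}\mathcal{OB}:g_{\boldsymbol\varphi}(\boldsymbol\xi,\boldsymbol\nu)=0\ \forall\boldsymbol\nu\in\mathcal V_{\boldsymbol\varphi}\}$; for the $L$-metric $g_L(\mathbf y,\mathbf z)=\sum_j\mathrm{Re}\int y_j\overline{z_j}$ this is $\mathcal H^L_{\boldsymbol\varphi}=\{\boldsymbol\xi\in H:\int\varphi_j\overline{\xi_j}\,dx=0\in\mathbb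 C\ \forall j\}$. A product metric here is one defined on all of $H$ of the form $g_{\boldsymbol\varphi}(\mathbf y,\mathbf z)=\sum_j\langle\mathcal G_{\boldsymbol\varphi,j}y_j,z_j\rangle$ with linear $\mathcal G_{\boldsymbol\varphi,j}:H^1_0(\mathcal D,\mathbb C)\to H^{-1}(\mathcal D,\mathbb C)$. *)

theory Defs
  imports "HOL-Analysis.Analysis"
begin

type_synonym 'n cfun = "real^'n \<Rightarrow> complex"

definition lipschitz_domain :: "(real^'n) set \<Rightarrow> bool" where
  "lipschitz_domain D \<longleftrightarrow> open D \<and> bounded D \<and> D \<noteq> {} \<and>
     (\<forall>x0\<in>frontier D. \<exists>r>0. \<exists>T k C (\<gamma>::real^'n \<Rightarrow> real).
        orthogonal_transformation T \<and> lipschitz_on C UNIV \<gamma> \<and>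
        (\<forall>y z. (\<forall>i. i \<noteq> k \<longrightarrow> y$i = z$i) \<longrightarrow> \<gamma> y = \<gamma> z) \<and>
        (\<forall>x\<in>ball x0 r. x \<in> D \<longleftrightarrow> (T (x - x0))$k < \<gamma> (T (x - x0))))"

definition pderiv_fun :: "'n::finite \<Rightarrow> 'n cfun \<Rightarrow> 'n cfun" where
  "pderiv_fun i f = (\<lambda>x. frechet_derivative f (at x) (axis i 1))"

text \<open>C-infinity functions: f lies in a family closed under partial differentiation,
  all of whose members are differentiable everywhere.\<close>
definition smooth_fun :: "('n::finite) cfun \<Rightarrow> bool" where
  "smooth_fun f \<longleftrightarrow> (\<exists>F. f \<in> F \<and> (\<forall>g\<in>F. g differentiable_on UNIV \<and>
       (\<forall>i. pderiv_fun i g \<in> F)))"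

definition test_fun :: "(real^'n::finite) set \<Rightarrow> 'n cfun \<Rightarrow> bool" where
  "test_fun D \<psi> \<longleftrightarrow> smooth_fun \<psi> \<and> compact (closure {x. \<psi> x \<noteq> 0})
      \<and> closure {x. \<psi> x \<noteq> 0} \<subseteq> D"

definition sq_norm_L2 :: "(real^'n::finite) set \<Rightarrow> 'n cfun \<Rightarrow> real" where
  "sq_norm_L2 D u = (LINT x:D|lborel. (cmod (u x))\<^sup>2)"

definition in_L2 :: "(real^'n::finite) set \<Rightarrow> 'n cfun \<Rightarrow> bool" where
  "in_L2 D u \<longleftrightarrow> set_borel_measurable lborel D u \<and>
      set_integrable lborel D (\<lambda>x. (cmod (u x))\<^sup>2)"

definition L2ip :: "(real^'n::finite) set \<Rightarrow> 'n cfun \<Rightarrow> 'n cfun \<Rightarrow> complex" where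
  "L2ip D y z = (LINT x:D|lborel. y x * cnj (z x))"

definition weak_deriv :: "(real^'n::finite) set \<Rightarrow> 'n cfun \<Rightarrow> 'n \<Rightarrow> 'n cfun \<Rightarrow> bool" where
  "weak_deriv D u i v \<longleftrightarrow> in_L2 D v \<and>
     (\<forall>\<psi>. test_fun D \<psi> \<longrightarrow>
        (LINT x:D|lborel. u x * pderiv_fun i \<psi> x) = - (LINT x:D|lborel. v x * \<psi> x))"

definition in_H1 :: "(real^'n::finite) set \<Rightarrow> 'n cfun \<Rightarrow> bool" where
  "in_H1 D u \<longleftrightarrow> in_L2 D u \<and> (\<forall>i. \<exists>v. weak_deriv D u i v)"

definition wgrad :: "(real^'n::finite) set \<Rightarrow> 'n cfun \<Rightarrow> 'n \<Rightarrow> 'n cfun" where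
  "wgrad D u i = (SOME v. weak_deriv D u i v)"

definition H1norm :: "(real^'n::finite) set \<Rightarrow> 'n cfun \<Rightarrow> real" where
  "H1norm D u = sqrt (sq_norm_L2 D u + (\<Sum>i\<in>UNIV. sq_norm_L2 D (wgrad D u i)))"

text \<open>H^1_0(D,C): closure of C_c^infinity(D) in the H^1 norm.\<close>
definition H10 :: "(real^'n::finite) set \<Rightarrow> 'n cfun set" where
  "H10 D = {u. in_H1 D u \<and> (\<exists>\<psi>s. (\<forall>n. test_fun D (\<psi>s n)) \<and>
              (\<lambda>n. H1norm D (\<lambda>x. u x - \<psi>s n x)) \<longlonglongrightarrow> 0)}"

section \<open>Product space H = [H^1_0]^p, components indexed by j < p\<close>

definition Hp :: "(real^'n::finite) set \<Rightarrow> nat \<Rightarrow> (nat \<Rightarrow> 'n cfun) set" where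
  "Hp D p = {\<xi>. (\<forall>j<p. \<xi> j \<in> H10 D) \<and> (\<forall>j\<ge>p. \<xi> j = (\<lambda>x. 0))}"

definition sphereS :: "(real^'n::finite) set \<Rightarrow> real \<Rightarrow> 'n cfun set" where
  "sphereS D N = {u \<in> H10 D. sq_norm_L2 D u = N}"

definition tangentS :: "(real^'n::finite) set \<Rightarrow> 'n cfun \<Rightarrow> 'n cfun set" where
  "tangentS D \<phi> = {z \<in> H10 D. Re (L2ip D z \<phi>) = 0}"

definition OB :: "(real^'n::finite) set \<Rightarrow> nat \<Rightarrow> (nat \<Rightarrow> real) \<Rightarrow> (nat \<Rightarrow> 'n cfun) set" where
  "OB D p N = {\<phi> \<in> Hp D p. \<forall>j<p. \<phi> j \<in> sphereS D (N j)}"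

definition tangentOB :: "(real^'n::finite) set \<Rightarrow> nat \<Rightarrow> (nat \<Rightarrow> 'n cfun) \<Rightarrow> (nat \<Rightarrow> 'n cfun) set" where
  "tangentOB D p \<phi> = {\<xi> \<in> Hp D p. \<forall>j<p. \<xi> j \<in> tangentS D (\<phi> j)}"

text \<open>Vertical space  { i phi Sigma : Sigma real diagonal }\<close>
definition vertical :: "nat \<Rightarrow> (nat \<Rightarrow> 'n cfun) \<Rightarrow> (nat \<Rightarrow> 'n cfun) set" where
  "vertical p \<phi> = {\<nu>. \<exists>\<sigma>::nat \<Rightarrow> real.
      \<nu> = (\<lambda>j. if j < p then (\<lambda>x. \<i> * \<phi> j x * complex_of_real (\<sigma> j)) else (\<lambda>x. 0))}"

text \<open>Gp j y z stands for the real duality pairing  < G_{phi,j} y, z >.\<close>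
definition prod_metric :: "nat \<Rightarrow> (nat \<Rightarrow> 'n cfun \<Rightarrow> 'n cfun \<Rightarrow> real)
      \<Rightarrow> (nat \<Rightarrow> 'n cfun) \<Rightarrow> (nat \<Rightarrow> 'n cfun) \<Rightarrow> real" where
  "prod_metric p Gp y z = (\<Sum>j<p. Gp j (y j) (z j))"

text \<open>G : H^1_0 -> H^{-1} (real-)linear, with values bounded real-linear functionals.\<close>
definition H10_to_Hm1_linear :: "(real^'n::finite) set \<Rightarrow> ('n cfun \<Rightarrow> 'n cfun \<Rightarrow> real) \<Rightarrow> bool" where
  "H10_to_Hm1_linear D G \<longleftrightarrow>
     (\<forall>y\<in>H10 D. \<forall>y'\<in>H10 D. \<forall>a b::real. \<forall>z\<in>H10 D.
         G (\<lambda>x. a * y x + b * y' x) z = a * G y z + b * G y' z) \<and>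
     (\<forall>y\<in>H10 D. (\<forall>z\<in>H10 D. \<forall>z'\<in>H10 D. \<forall>a b::real.
         G y (\<lambda>x. a * z x + b * z' x) = a * G y z + b * G y z') \<and>
       (\<exists>C. \<forall>z\<in>H10 D. \<bar>G y z\<bar> \<le> C * H1norm D z))"

text \<open>A product metric at phi: the component operators are linear H^1_0 -> H^{-1}
  and g_phi is an inner product (symmetric, positive definite) on T_phi OB
  (definiteness modulo null functions, i.e. elements of the Hilbert space).\<close>
definition is_product_metric :: "(real^'n::finite) set \<Rightarrow> nat \<Rightarrow> (nat \<Rightarrow> 'n cfun)
      \<Rightarrow> (nat \<Rightarrow> 'n cfun \<Rightarrow> 'n cfun \<Rightarrow> real) \<Rightarrow> bool" where
  "is_product_metric D p \<phi> Gp \<longleftrightarrow>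
     (\<forall>j<p. H10_to_Hm1_linear D (Gp j)) \<and>
     (\<forall>y\<in>tangentOB D p \<phi>. \<forall>z\<in>tangentOB D p \<phi>. prod_metric p Gp y z = prod_metric p Gp z y) \<and>
     (\<forall>\<xi>\<in>tangentOB D p \<phi>. (\<exists>j<p. sq_norm_L2 D (\<xi> j) \<noteq> 0) \<longrightarrow> prod_metric p Gp \<xi> \<xi> > 0)"

definition horizontal_g :: "(real^'n::finite) set \<Rightarrow> nat \<Rightarrow> (nat \<Rightarrow> 'n cfun)
      \<Rightarrow> (nat \<Rightarrow> 'n cfun \<Rightarrow> 'n cfun \<Rightarrow> real) \<Rightarrow> (nat \<Rightarrow> 'n cfun) set" where
  "horizontal_g D p \<phi> Gp = {\<xi> \<in> tangentOB D p \<phi>. \<forall>\<nu>\<in>vertical p \<phi>. prod_metric p Gp \<xi> \<nu> = 0}"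

definition horizontal_L :: "(real^'n::finite) set \<Rightarrow> nat \<Rightarrow> (nat \<Rightarrow> 'n cfun) \<Rightarrow> (nat \<Rightarrow> 'n cfun) set" where
  "horizontal_L D p \<phi> = {\<xi> \<in> Hp D p. \<forall>j<p. L2ip D (\<phi> j) (\<xi> j) = 0}"

end

theory Submission
  imports Defs "HOL-Computational_Algebra.Polynomial" "HOL-Real_Asymp.Real_Asymp"
begin
definition flP :: "real poly \<Rightarrow> real \<Rightarrow> real" where
  "flP P s = (if s > 0 then poly P (inverse s) * exp (- inverse s) else 0)"

definition flQ :: "real poly \<Rightarrow> real poly" where
  "flQ P = [:0,0,1:] * (P - pderiv P)"

lemma poly_div_exp_0: "((\<lambda>u::real. poly P u / exp u) \<longlongrightarrow> 0) at_top"
proof -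
  have "((\<lambda>u. \<Sum>i\<le>degree P. coeff P i * (u ^ i / exp u)) \<longlongrightarrow> (\<Sum>i\<le>degree P. coeff P i * 0)) at_top"
    apply (intro tendsto_sum tendsto_mult tendsto_const)
    subgoal for i using tendsto_power_div_exp_0[of i] by simp
    done
  then show ?thesis
    by (simp add: poly_altdef sum_divide_distrib)
qed

lemma flP_deriv_pos:
  assumes "s > 0"
  shows "(flP P has_real_derivative flP (flQ P) s) (at s)"
proof -
  have s0: "s \<noteq> 0" using assms by simp
  have d1: "((\<lambda>s. inverse s) has_real_derivative (- (inverse s ^ Suc (Suc 0)))) (at s)"
    using DERIV_inverse[OF s0] by simp
  have d2: "((\<lambda>s. poly P (inverse s)) has_real_derivative poly (pderiv P) (inverse s) * (- (inverse s ^ Suc (Suc 0)))) (at s)"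
    by (rule DERIV_chain2[OF poly_DERIV d1])
  have d1': "((\<lambda>s. - inverse s) has_real_derivative (inverse s ^ Suc (Suc 0))) (at s)"
    using DERIV_minus[OF d1] by simp
  have d3: "((\<lambda>s. exp (- inverse s)) has_real_derivative exp (- inverse s) * (inverse s ^ Suc (Suc 0))) (at s)"
    by (rule DERIV_chain2[OF DERIV_exp d1'])
  have d: "((\<lambda>s. poly P (inverse s) * exp (- inverse s)) has_real_derivative
      poly (pderiv P) (inverse s) * (- (inverse s ^ Suc (Suc 0))) * exp (- inverse s)
       + exp (- inverse s) * (inverse s ^ Suc (Suc 0)) * poly P (inverse s)) (at s)"
    using DERIV_mult[OF d2 d3] by (simp add: algebra_simps)
  have e: "poly (pderiv P) (inverse s) * (- (inverse s ^ Suc (Suc 0))) * exp (- inverse s)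
       + exp (- inverse s) * (inverse s ^ Suc (Suc 0)) * poly P (inverse s) = flP (flQ P) s"
    using assms by (simp add: flP_def flQ_def algebra_simps)
  show ?thesis
    apply (rule has_field_derivative_transform_within_open[where S="{0<..}"])
    using d[unfolded e] apply assumption
    using assms by (auto simp: flP_def)
qed

lemma flP_deriv_neg:
  assumes "s < 0"
  shows "(flP P has_real_derivative flP (flQ P) s) (at s)"
proof -
  have "((\<lambda>s. 0) has_real_derivative flP (flQ P) s) (at s)" using assms by (simp add: flP_def)
  then show ?thesis
    apply (rule has_field_derivative_transform_within_open[where S="{..<0}"])
    using assms by (auto simp: flP_def)
qed

lemma flP_deriv_0:
  "(flP P has_real_derivative flP (flQ P) 0) (at 0)"
proof -
  have "((\<lambda>y. (flP P y - flP P 0) / (y - 0)) \<longlongrightarrow> 0) (at 0)"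
  proof (rule filterlim_split_at_real)
    have "eventually (\<lambda>y. 0 = (flP P y - flP P 0) / (y - 0)) (at_left 0)"
      by (auto simp: eventually_at_left_field flP_def intro!: exI[of _ "-1"])
    then show "((\<lambda>y. (flP P y - flP P 0) / (y - 0)) \<longlongrightarrow> 0) (at_left 0)"
      by (rule Lim_transform_eventually[OF tendsto_const])
  next
    have lim: "((\<lambda>u. poly (pCons 0 P) u / exp u) \<longlongrightarrow> 0) at_top"
      by (rule poly_div_exp_0)
    have "((\<lambda>y. poly (pCons 0 P) (inverse y) / exp (inverse y)) \<longlongrightarrow> 0) (at_right 0)"
      by (rule filterlim_compose[OF lim filterlim_inverse_at_top_right])
    moreover have "eventually (\<lambda>y. poly (pCons 0 P) (inverse y) / exp (inverse y) = (flP P y - flP P 0) / (y - 0)) (at_right 0)"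
      by (auto simp: eventually_at_right_field flP_def exp_minus divide_inverse intro!: exI[of _ "1"])
    ultimately show "((\<lambda>y. (flP P y - flP P 0) / (y - 0)) \<longlongrightarrow> 0) (at_right 0)"
      by (rule Lim_transform_eventually)
  qed
  then show ?thesis
    by (simp add: has_field_derivative_iff flP_def)
qed

lemma flP_deriv: "(flP P has_real_derivative flP (flQ P) s) (at s)"
  using flP_deriv_pos flP_deriv_neg flP_deriv_0 by (cases "s > 0"; cases "s < 0") auto


fun Ck :: "nat \<Rightarrow> (real \<Rightarrow> real) \<Rightarrow> bool" where
  "Ck 0 f = True"
| "Ck (Suc k) f = ((\<forall>x. f differentiable (at x)) \<and> Ck k (deriv f))"

lemma Ck_Suc_down: "Ck (Suc k) f \<Longrightarrow> Ck k f"
  by (induction k arbitrary: f) auto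

lemma deriv_const_fun: "deriv (\<lambda>x. c) = (\<lambda>x. 0::real)"
  by (rule ext, rule DERIV_imp_deriv) simp

lemma Ck_const: "Ck k (\<lambda>x. c)"
  by (induction k arbitrary: c) (auto simp: deriv_const_fun)

lemma Ck_add: "Ck k f \<Longrightarrow> Ck k g \<Longrightarrow> Ck k (\<lambda>x. f x + g x)"
proof (induction k arbitrary: f g)
  case 0 then show ?case by simp
next
  case (Suc k)
  then have df: "\<And>x. f differentiable (at x)" and dg: "\<And>x. g differentiable (at x)" by auto
  have "deriv (\<lambda>x. f x + g x) = (\<lambda>x. deriv f x + deriv g x)"
    by (rule ext, rule DERIV_imp_deriv, rule DERIV_add)
       (use df dg DERIV_deriv_iff_real_differentiable in auto)
  moreover have "\<forall>x. (\<lambda>x. f x + g x) differentiable (at x)"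
    using df dg by auto
  ultimately show ?case using Suc by auto
qed

lemma Ck_mult: "Ck k f \<Longrightarrow> Ck k g \<Longrightarrow> Ck k (\<lambda>x. f x * g x)"
proof (induction k arbitrary: f g)
  case 0 then show ?case by simp
next
  case (Suc k)
  then have df: "\<And>x. f differentiable (at x)" and dg: "\<And>x. g differentiable (at x)" by auto
  have "deriv (\<lambda>x. f x * g x) = (\<lambda>x. deriv f x * g x + f x * deriv g x)"
  proof (rule ext, rule DERIV_imp_deriv)
    fix x
    have "((\<lambda>x. f x * g x) has_real_derivative deriv f x * g x + deriv g x * f x) (at x)"
      by (rule DERIV_mult) (use df dg DERIV_deriv_iff_real_differentiable in auto)
    then show "((\<lambda>x. f x * g x) has_real_derivative deriv f x * g x + f x * deriv g x) (at x)"
      by (simp add: mult.commute)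
  qed
  moreover have "\<forall>x. (\<lambda>x. f x * g x) differentiable (at x)"
    using df dg by auto
  moreover have "Ck k (\<lambda>x. deriv f x * g x + f x * deriv g x)"
    using Suc.IH Suc.prems Ck_Suc_down Ck_add by auto
  ultimately show ?case by auto
qed

lemma Ck_affine: "Ck k f \<Longrightarrow> Ck k (\<lambda>x. f (c * x + d))"
proof (induction k arbitrary: f)
  case 0 then show ?case by simp
next
  case (Suc k)
  then have df: "\<And>x. f differentiable (at x)" by auto
  have dd: "((\<lambda>x. f (c * x + d)) has_real_derivative deriv f (c * x + d) * c) (at x)" for x
    by (rule DERIV_chain2[where f=f]) (use df DERIV_deriv_iff_real_differentiable in \<open>auto intro!: derivative_eq_intros\<close>)
  have "deriv (\<lambda>x. f (c * x + d)) = (\<lambda>x. (\<lambda>x. c) x * (\<lambda>x. deriv f (c * x + d)) x)"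
    by (rule ext, rule DERIV_imp_deriv) (use dd in \<open>simp add: mult.commute\<close>)
  moreover have "\<forall>x. (\<lambda>x. f (c * x + d)) differentiable (at x)"
    using dd real_differentiable_def by blast
  moreover have "Ck k (\<lambda>x. (\<lambda>x. c) x * (\<lambda>x. deriv f (c * x + d)) x)"
    by (rule Ck_mult[OF Ck_const]) (use Suc in auto)
  ultimately show ?case by auto
qed

lemma Ck_flP: "Ck k (flP P)"
proof (induction k arbitrary: P)
  case 0 then show ?case by simp
next
  case (Suc k)
  have "deriv (flP P) = flP (flQ P)"
    by (rule ext, rule DERIV_imp_deriv, rule flP_deriv)
  moreover have "\<forall>x. flP P differentiable (at x)"
    using flP_deriv real_differentiable_def by blast
  ultimately show ?case using Suc by auto
qed

definition smooth1 :: "(real \<Rightarrow> real) \<Rightarrow> bool" where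
  "smooth1 f \<longleftrightarrow> (\<forall>k. Ck k f)"

lemma smooth1_differentiable: "smooth1 f \<Longrightarrow> f differentiable (at x)"
  unfolding smooth1_def using Ck.simps(2) by blast

lemma smooth1_deriv: "smooth1 f \<Longrightarrow> smooth1 (deriv f)"
  unfolding smooth1_def using Ck.simps(2) by blast

lemma smooth1_mult: "smooth1 f \<Longrightarrow> smooth1 g \<Longrightarrow> smooth1 (\<lambda>x. f x * g x)"
  unfolding smooth1_def using Ck_mult by blast

lemma smooth1_affine: "smooth1 f \<Longrightarrow> smooth1 (\<lambda>x. f (c * x + d))"
  unfolding smooth1_def using Ck_affine by blast

lemma smooth1_flP: "smooth1 (flP P)"
  unfolding smooth1_def using Ck_flP by blast


definition prodfun :: "('n::finite \<Rightarrow> real \<Rightarrow> real) \<Rightarrow> 'n cfun" where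
  "prodfun g = (\<lambda>x. complex_of_real (\<Prod>k\<in>UNIV. g k (x $ k)))"

lemma prodfun_has_derivative:
  assumes "\<And>k t. g k differentiable (at t)"
  shows "(prodfun g has_derivative (\<lambda>h. complex_of_real (\<Sum>k\<in>UNIV. deriv (g k) (x$k) * h$k * (\<Prod>j\<in>UNIV-{k}. g j (x$j))))) (at x)"
proof -
  have c: "((\<lambda>x. g k (x$k)) has_derivative (\<lambda>h. deriv (g k) (x$k) * h$k)) (at x)" for k
  proof -
    have "(g k has_derivative (*) (deriv (g k) (x$k))) (at (x$k))"
      using assms DERIV_deriv_iff_real_differentiable has_field_derivative_def by blast
    from has_derivative_compose[OF bounded_linear_imp_has_derivative[OF bounded_linear_vec_nth] this]
    show ?thesis by simp
  qed
  have "((\<lambda>x. \<Prod>k\<in>UNIV. g k (x$k)) has_derivative (\<lambda>h. \<Sum>k\<in>UNIV. deriv (g k) (x$k) * h$k * (\<Prod>j\<in>UNIV-{k}. g j (x$j)))) (at x)"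
    by (rule has_derivative_prod[of UNIV "\<lambda>k x. g k (x$k)", OF c])
  from has_derivative_compose[OF this bounded_linear_imp_has_derivative[OF bounded_linear_of_real]]
  show ?thesis unfolding prodfun_def .
qed

lemma pderiv_prodfun:
  assumes "\<And>k t. g k differentiable (at t)"
  shows "pderiv_fun i (prodfun g) = prodfun (g(i := deriv (g i)))"
proof (rule ext)
  fix x :: "real^'a"
  have "pderiv_fun i (prodfun g) x = complex_of_real (\<Sum>k\<in>UNIV. deriv (g k) (x$k) * (axis i 1 :: real^'a)$k * (\<Prod>j\<in>UNIV-{k}. g j (x$j)))"
  proof -
    have "(prodfun g has_derivative (\<lambda>h. complex_of_real (\<Sum>k\<in>UNIV. deriv (g k) (x$k) * h$k * (\<Prod>j\<in>UNIV-{k}. g j (x$j))))) (at x)"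
      by (rule prodfun_has_derivative[OF assms])
    then have eq: "(\<lambda>h. complex_of_real (\<Sum>k\<in>UNIV. deriv (g k) (x$k) * h$k * (\<Prod>j\<in>UNIV-{k}. g j (x$j)))) = frechet_derivative (prodfun g) (at x)"
      by (rule frechet_derivative_at)
    show ?thesis unfolding pderiv_fun_def eq[symmetric] by (rule refl)
  qed
  also have "(\<Sum>k\<in>UNIV. deriv (g k) (x$k) * (axis i 1 :: real^'a)$k * (\<Prod>j\<in>UNIV-{k}. g j (x$j)))
      = deriv (g i) (x$i) * (\<Prod>j\<in>UNIV-{i}. g j (x$j))"
  proof -
    have z: "\<forall>k\<in>UNIV-{i}. deriv (g k) (x$k) * (axis i 1 :: real^'a)$k * (\<Prod>j\<in>UNIV-{k}. g j (x$j)) = 0"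
      by (simp add: axis_def)
    show ?thesis
      by (subst sum.remove[of UNIV i]) (simp_all add: sum.neutral[OF z] axis_nth)
  qed
  also have "\<dots> = (\<Prod>k\<in>UNIV. (g(i := deriv (g i))) k (x $ k))"
  proof -
    have "(\<Prod>k\<in>UNIV. (g(i := deriv (g i))) k (x $ k)) = (g(i := deriv (g i))) i (x $ i) * (\<Prod>k\<in>UNIV-{i}. (g(i := deriv (g i))) k (x $ k))"
      by (rule prod.remove) simp_all
    moreover have "(\<Prod>k\<in>UNIV-{i}. (g(i := deriv (g i))) k (x $ k)) = (\<Prod>k\<in>UNIV-{i}. g k (x $ k))"
      by (rule prod.cong) simp_all
    ultimately show ?thesis by simp
  qed
  finally show "pderiv_fun i (prodfun g) x = prodfun (g(i := deriv (g i))) x"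
    unfolding prodfun_def by simp
qed

lemma smooth_prodfun:
  assumes "\<And>k. smooth1 (g k)"
  shows "smooth_fun (prodfun g)"
  unfolding smooth_fun_def
proof (intro exI[of _ "{prodfun g | g. \<forall>k. smooth1 (g k)}"] conjI ballI allI)
  show "prodfun g \<in> {prodfun g |g. \<forall>k. smooth1 (g k)}" using assms by auto
next
  fix f assume "f \<in> {prodfun g |g. \<forall>k. smooth1 (g k)}"
  then obtain h where f: "f = prodfun h" and h: "\<And>k. smooth1 (h k)" by auto
  have d: "\<And>k t. h k differentiable (at t)" using h smooth1_differentiable by blast
  show "f differentiable_on UNIV"
    unfolding f differentiable_on_def differentiable_def using prodfun_has_derivative[of h, OF d] by blast
  fix i
  have "\<forall>k. smooth1 ((h(i := deriv (h i))) k)" using h smooth1_deriv by auto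
  then show "pderiv_fun i f \<in> {prodfun g |g. \<forall>k. smooth1 (g k)}"
    unfolding f pderiv_prodfun[OF d] by blast
qed

definition bump1 :: "real \<Rightarrow> real \<Rightarrow> real \<Rightarrow> real \<Rightarrow> real" where
  "bump1 m a b t = flP 1 (m * t + (- m * a - 1)) * flP 1 ((- m) * t + (m * b - 1))"

lemma smooth1_bump1: "smooth1 (bump1 m a b)"
  unfolding bump1_def by (intro smooth1_mult smooth1_affine smooth1_flP)

lemma flP1_bounds: "0 \<le> flP 1 s" "flP 1 s \<le> 1"
  by (auto simp: flP_def)

lemma bump1_bounds: "0 \<le> bump1 m a b t" "bump1 m a b t \<le> 1"
  unfolding bump1_def using flP1_bounds by (auto intro: mult_le_one)

lemma bump1_nz:
  assumes "bump1 m a b t \<noteq> 0" "m > 0"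
  shows "a + 1/m < t" "t < b - 1/m"
proof -
  from assms have "m * t + (- m * a - 1) > 0" "(- m) * t + (m * b - 1) > 0"
    by (auto simp: bump1_def flP_def split: if_splits)
  with assms(2) show "a + 1/m < t" "t < b - 1/m"
    by (auto simp: field_simps)
qed

lemma flP1_at_top: "(flP 1 \<longlongrightarrow> 1) at_top"
proof -
  have "((\<lambda>s. exp (- inverse s)) \<longlongrightarrow> exp (- 0)) (at_top::real filter)"
    by (intro tendsto_intros tendsto_inverse_0_at_top filterlim_ident)
  moreover have "eventually (\<lambda>s. exp (- inverse s) = flP 1 s) (at_top::real filter)"
    using eventually_gt_at_top[of 0] by eventually_elim (simp add: flP_def)
  ultimately show ?thesis by (simp add: Lim_transform_eventually)
qed

lemma bump1_lim:
  assumes "a < t" "t < b"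
  shows "(\<lambda>n. bump1 (real (Suc n)) a b t) \<longlonglongrightarrow> 1"
proof -
  have l1: "filterlim (\<lambda>n. real (Suc n) * t + (- real (Suc n) * a - 1)) at_top sequentially"
  proof -
    have "t - a > 0" using assms by simp
    then have "filterlim (\<lambda>n. real (Suc n) * (t - a) - 1) at_top sequentially" by real_asymp
    then show ?thesis by (simp add: algebra_simps)
  qed
  have l2: "filterlim (\<lambda>n. (- real (Suc n)) * t + (real (Suc n) * b - 1)) at_top sequentially"
  proof -
    have "b - t > 0" using assms by simp
    then have "filterlim (\<lambda>n. real (Suc n) * (b - t) - 1) at_top sequentially" by real_asymp
    then show ?thesis by (simp add: algebra_simps)
  qed
  have "(\<lambda>n. flP 1 (real (Suc n) * t + (- real (Suc n) * a - 1)) * flP 1 ((- real (Suc n)) * t + (real (Suc n) * b - 1))) \<longlonglongrightarrow> 1 * 1"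
    by (intro tendsto_mult filterlim_compose[OF flP1_at_top] l1 l2)
  then show ?thesis unfolding bump1_def by simp
qed

definition bumpN :: "nat \<Rightarrow> real^'n::finite \<Rightarrow> real^'n \<Rightarrow> 'n cfun" where
  "bumpN n a b = prodfun (\<lambda>k. bump1 (real (Suc n)) (a$k) (b$k))"

lemma bumpN_smooth: "smooth_fun (bumpN n a b)"
  unfolding bumpN_def by (intro smooth_prodfun smooth1_bump1)

lemma bumpN_bound: "cmod (bumpN n a b x) \<le> 1"
proof -
  let ?P = "\<Prod>k\<in>UNIV. bump1 (real (Suc n)) (a$k) (b$k) (x$k)"
  have "0 \<le> ?P" "?P \<le> 1" using bump1_bounds by (auto intro!: prod_nonneg prod_le_1)
  then show ?thesis unfolding bumpN_def prodfun_def norm_of_real by simp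
qed

lemma bumpN_real: "bumpN n a b x = complex_of_real (Re (bumpN n a b x))"
  unfolding bumpN_def prodfun_def by simp

lemma bumpN_support:
  "{x. bumpN n a b x \<noteq> 0} \<subseteq> cbox (\<chi> k. a$k + 1/real (Suc n)) (\<chi> k. b$k - 1/real (Suc n))"
proof
  fix x assume "x \<in> {x. bumpN n a b x \<noteq> 0}"
  then have "\<forall>k. bump1 (real (Suc n)) (a$k) (b$k) (x$k) \<noteq> 0"
    unfolding bumpN_def prodfun_def by auto
  then show "x \<in> cbox (\<chi> k. a$k + 1/real (Suc n)) (\<chi> k. b$k - 1/real (Suc n))"
  proof (unfold mem_box_cart, intro allI)
    fix i
    have "bump1 (real (Suc n)) (a$i) (b$i) (x$i) \<noteq> 0" using \<open>\<forall>k. _\<close> by blast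
    from bump1_nz[OF this] show "(\<chi> k. a$k + 1/real (Suc n)) $ i \<le> x $ i \<and> x $ i \<le> (\<chi> k. b$k - 1/real (Suc n)) $ i"
      by simp
  qed
qed

lemma bumpN_test:
  assumes "box a b \<subseteq> D"
  shows "test_fun D (bumpN n a b)"
proof -
  let ?C = "cbox (\<chi> k. a$k + 1/real (Suc n)) (\<chi> k. b$k - 1/real (Suc n))"
  have cl: "closure {x. bumpN n a b x \<noteq> 0} \<subseteq> ?C"
    by (rule closure_minimal[OF bumpN_support closed_cbox])
  have "?C \<subseteq> box a b"
  proof
    fix x assume "x \<in> ?C"
    then have h: "\<forall>i. a$i + 1/real(Suc n) \<le> x$i \<and> x$i \<le> b$i - 1/real(Suc n)"
      unfolding mem_box_cart vec_lambda_beta .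
    have p: "0 < 1/real(Suc n)" by simp
    show "x \<in> box a b"
    proof (unfold mem_box_cart, intro allI)
      fix i show "a $ i < x $ i \<and> x $ i < b $ i" using h[rule_format, of i] p by linarith
    qed
  qed
  moreover have "compact (closure {x. bumpN n a b x \<noteq> 0})"
    using cl by (meson bounded_cbox bounded_subset closed_closure compact_eq_bounded_closed)
  ultimately show ?thesis unfolding test_fun_def using bumpN_smooth cl assms by blast
qed

lemma bumpN_lim:
  "(\<lambda>n. bumpN n a b x) \<longlonglongrightarrow> indicator (box a b) x"
proof (cases "x \<in> box a b")
  case True
  then have "(\<lambda>n. \<Prod>k\<in>UNIV. bump1 (real (Suc n)) (a$k) (b$k) (x$k)) \<longlonglongrightarrow> (\<Prod>k\<in>(UNIV::'a set). 1)"
    by (intro tendsto_prod bump1_lim) (auto simp: mem_box_cart)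
  then have "(\<lambda>n. complex_of_real (\<Prod>k\<in>UNIV. bump1 (real (Suc n)) (a$k) (b$k) (x$k))) \<longlonglongrightarrow> complex_of_real 1"
    by (intro tendsto_of_real) simp
  then show ?thesis using True unfolding bumpN_def prodfun_def by simp
next
  case False
  then obtain k where "\<not> (a$k < x$k \<and> x$k < b$k)" by (auto simp: mem_box_cart)
  then have "bump1 (real (Suc n)) (a$k) (b$k) (x$k) = 0" for n
  proof -
    have m: "real (Suc n) > 0" by simp
    consider "x$k \<le> a$k" | "b$k \<le> x$k" using \<open>\<not> (a$k < x$k \<and> x$k < b$k)\<close> by linarith
    then show ?thesis
    proof cases
      case 1
      have "real (Suc n) * x$k \<le> real (Suc n) * a$k" by (rule mult_left_mono) (use 1 in auto)
      then have "real (Suc n) * x$k + (- real (Suc n) * a$k - 1) < 0" by linarith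
      then show ?thesis unfolding bump1_def by (simp add: flP_def)
    next
      case 2
      have "real (Suc n) * b$k \<le> real (Suc n) * x$k" by (rule mult_left_mono) (use 2 in auto)
      then have "(- real (Suc n)) * x$k + (real (Suc n) * b$k - 1) < 0" by linarith
      then show ?thesis unfolding bump1_def by (simp add: flP_def)
    qed
  qed
  then have "(\<Prod>k\<in>UNIV. bump1 (real (Suc n)) (a$k) (b$k) (x$k)) = 0" for n
    by (meson UNIV_I finite prod_zero)
  then have "bumpN n a b x = 0" for n
    unfolding bumpN_def prodfun_def by simp
  then show ?thesis using False by simp
qed

lemma test_fun_cont: "test_fun D \<psi> \<Longrightarrow> continuous_on UNIV \<psi>"
  unfolding test_fun_def smooth_fun_def by (meson differentiable_imp_continuous_on)

lemma cont_meas: "continuous_on UNIV (f :: real^'n::finite \<Rightarrow> complex) \<Longrightarrow> f \<in> borel_measurable lborel"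
  using borel_measurable_continuous_onI measurable_lborel1 by (metis measurable_cong_sets sets_lborel)

lemma box_integral_zero:
  fixes w :: "'n::finite cfun"
  assumes D: "open D" and wi: "set_integrable lborel D w"
    and orth: "\<And>\<psi>. test_fun D \<psi> \<Longrightarrow> (\<forall>x. cmod (\<psi> x) \<le> 1) \<Longrightarrow> (LINT x:D|lborel. w x * \<psi> x) = 0"
    and ab: "box a b \<subseteq> D"
  shows "(LINT x:box a b|lborel. w x) = 0"
proof -
  let ?W = "\<lambda>x. indicator D x *\<^sub>R w x"
  have Wm: "?W \<in> borel_measurable lborel" using wi unfolding set_integrable_def by auto
  have bm: "bumpN n a b \<in> borel_measurable lborel" for n
    using bumpN_test[OF ab] test_fun_cont cont_meas by blast
  let ?s = "\<lambda>n x. ?W x * bumpN n a b x"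
  let ?f = "\<lambda>x. ?W x * indicator (box a b) x"
  have fm: "?f \<in> borel_measurable lborel" using Wm by measurable
  have sm: "?s n \<in> borel_measurable lborel" for n using Wm bm[of n] by measurable
  have lim: "AE x in lborel. (\<lambda>n. ?s n x) \<longlonglongrightarrow> ?f x"
    by (intro AE_I2 tendsto_mult tendsto_const bumpN_lim)
  have bd: "AE x in lborel. norm (?s n x) \<le> norm (?W x)" for n
  proof (intro AE_I2)
    fix x
    have "norm (?s n x) = norm (?W x) * cmod (bumpN n a b x)" by (simp add: norm_mult)
    also have "\<dots> \<le> norm (?W x) * 1" by (intro mult_left_mono bumpN_bound) simp
    finally show "norm (?s n x) \<le> norm (?W x)" by simp
  qed
  have wn: "integrable lborel (\<lambda>x. norm (?W x))"
    using wi unfolding set_integrable_def by (rule integrable_norm)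
  have conv: "(\<lambda>n. integral\<^sup>L lborel (?s n)) \<longlonglongrightarrow> integral\<^sup>L lborel ?f"
    by (rule integral_dominated_convergence[OF fm sm wn lim bd])
  have "integral\<^sup>L lborel (?s n) = 0" for n
  proof -
    have "integral\<^sup>L lborel (?s n) = (LINT x:D|lborel. w x * bumpN n a b x)"
      unfolding set_lebesgue_integral_def by (rule Bochner_Integration.integral_cong) (simp_all add: scaleR_conv_of_real)
    also have "\<dots> = 0" using orth[OF bumpN_test[OF ab]] bumpN_bound by blast
    finally show ?thesis .
  qed
  then have "(\<lambda>n. integral\<^sup>L lborel (?s n)) \<longlonglongrightarrow> 0" by simp
  with conv have "integral\<^sup>L lborel ?f = 0"
    by (rule LIMSEQ_unique)
  moreover have "integral\<^sup>L lborel ?f = (LINT x:box a b|lborel. w x)"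
    unfolding set_lebesgue_integral_def
  proof (rule Bochner_Integration.integral_cong)
    fix x
    show "?W x * indicator (box a b) x = indicator (box a b) x *\<^sub>R w x"
      using ab by (cases "x \<in> box a b") (auto simp: indicator_def)
  qed simp
  ultimately show ?thesis by simp
qed

lemma set_integral_indicator_mult:
  "(LINT x:A|M. (indicator B x *\<^sub>R (f x :: complex))) = (LINT x:(A \<inter> B)|M. f x)"
  unfolding set_lebesgue_integral_def
  by (rule Bochner_Integration.integral_cong) (auto simp: indicator_def)

lemma ae_zero_on_box:
  fixes w :: "'n::finite cfun"
  assumes D: "open D" and wi: "set_integrable lborel D w"
    and box0: "\<And>a b. box a b \<subseteq> D \<Longrightarrow> (LINT x:box a b|lborel. w x) = 0"
    and cd: "box c d \<subseteq> D"
  shows "AE x in lborel. x \<in> box c d \<longrightarrow> w x = 0"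
proof -
  let ?h = "\<lambda>x. indicator (box c d) x *\<^sub>R w x"
  have hi: "integrable lborel ?h"
    using set_integrable_subset[OF wi _ cd] unfolding set_integrable_def by simp
  let ?G = "range (\<lambda>(a, b). box a b :: (real^'n) set)"
  have Gst: "Int_stable ?G" by (auto simp: Int_stable_def box_Int_box)
  have GP: "?G \<subseteq> Pow UNIV" by auto
  have all: "(LINT x:A|lborel. ?h x) = 0" if A: "A \<in> sets lborel" for A
  proof -
    have "A \<in> sigma_sets UNIV ?G" using A unfolding sets_lborel borel_eq_box by simp
    with Gst GP show ?thesis
    proof (induction rule: sigma_sets_induct_disjoint)
      case (basic A)
      then obtain a b where A: "A = box a b" by auto
      have "(LINT x:A|lborel. ?h x) = (LINT x:(A \<inter> box c d)|lborel. w x)"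
        by (rule set_integral_indicator_mult)
      also have "A \<inter> box c d = box (\<Sum>i\<in>Basis. max (a \<bullet> i) (c \<bullet> i) *\<^sub>R i) (\<Sum>i\<in>Basis. min (b \<bullet> i) (d \<bullet> i) *\<^sub>R i)"
        unfolding A box_Int_box ..
      also have "(LINT x:box (\<Sum>i\<in>Basis. max (a \<bullet> i) (c \<bullet> i) *\<^sub>R i) (\<Sum>i\<in>Basis. min (b \<bullet> i) (d \<bullet> i) *\<^sub>R i)|lborel. w x) = 0"
        apply (rule box0)
        using cd A box_Int_box[of a b c d, symmetric] by auto
      finally show ?case .
    next
      case empty then show ?case by (simp add: set_lebesgue_integral_def)
    next
      case (compl A)
      have Am: "A \<in> sets lborel" using compl(1) unfolding sets_lborel borel_eq_box by simp
      have i1: "integrable lborel (\<lambda>x. indicator A x *\<^sub>R ?h x)"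
        by (rule integrable_mult_indicator[OF Am hi])
      have "(LINT x:(UNIV - A)|lborel. ?h x) = integral\<^sup>L lborel (\<lambda>x. ?h x - indicator A x *\<^sub>R ?h x)"
        unfolding set_lebesgue_integral_def
        by (rule Bochner_Integration.integral_cong) (auto simp: indicator_def)
      also have "\<dots> = integral\<^sup>L lborel ?h - (LINT x:A|lborel. ?h x)"
        unfolding set_lebesgue_integral_def by (rule Bochner_Integration.integral_diff[OF hi i1])
      also have "integral\<^sup>L lborel ?h = (LINT x:box c d|lborel. w x)"
        by (simp add: set_lebesgue_integral_def)
      also have "\<dots> = 0" by (rule box0[OF cd])
      finally show ?case using compl(2) by simp
    next
      case (union A)
      have Am: "A i \<in> sets lborel" for i using union(2) unfolding sets_lborel borel_eq_box by auto
      have "(LINT x:(\<Union>i. A i)|lborel. ?h x) = (\<Sum>i. (LINT x:(A i)|lborel. ?h x))"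
      proof (rule lebesgue_integral_countable_add)
        show "A i \<in> sets lborel" for i by (rule Am)
        show "A i \<inter> A j = {}" if "i \<noteq> j" for i j using union(1) that by (simp add: disjoint_family_on_def)
        show "set_integrable lborel (\<Union>i. A i) ?h"
          unfolding set_integrable_def by (rule integrable_mult_indicator[OF _ hi]) (use Am in auto)
      qed
      also have "\<dots> = 0" using union(3) by simp
      finally show ?case by simp
    qed
  qed
  have "AE x in lborel. ?h x = 0"
    by (rule sigma_finite_measure.density_zero[OF _ hi all]) (rule sigma_finite_lborel)
  then show ?thesis by eventually_elim (auto simp: indicator_def)
qed

lemma ae_zero_from_boxes:
  fixes w :: "'n::finite cfun"
  assumes D: "open D" and wi: "set_integrable lborel D w"
    and box0: "\<And>a b. box a b \<subseteq> D \<Longrightarrow> (LINT x:box a b|lborel. w x) = 0"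
  shows "AE x in lborel. x \<in> D \<longrightarrow> w x = 0"
proof -
  obtain \<D> where c: "countable \<D>" and sub: "\<D> \<subseteq> Pow D" and bx: "\<And>X. X \<in> \<D> \<Longrightarrow> \<exists>a b. X = box a b"
      and un: "\<Union>\<D> = D"
    using open_countable_Union_open_box[OF D] by metis
  have "\<forall>X\<in>\<D>. AE x in lborel. x \<in> X \<longrightarrow> w x = 0"
  proof
    fix X assume X: "X \<in> \<D>"
    then obtain a b where "X = box a b" using bx by blast
    with X sub show "AE x in lborel. x \<in> X \<longrightarrow> w x = 0"
      using ae_zero_on_box[OF D wi box0] by auto
  qed
  then have "AE x in lborel. \<forall>X\<in>\<D>. x \<in> X \<longrightarrow> w x = 0"
    using AE_ball_countable[OF c, where M=lborel and P="\<lambda>x X. x \<in> X \<longrightarrow> w x = 0"] by simp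
  then show ?thesis
  proof (rule AE_mp, intro AE_I2 impI)
    fix x assume h: "\<forall>X\<in>\<D>. x \<in> X \<longrightarrow> w x = 0" and xD: "x \<in> D"
    from xD un obtain X where "X \<in> \<D>" "x \<in> X" by blast
    with h show "w x = 0" by blast
  qed
qed

lemma fundamental_lemma:
  fixes w :: "'n::finite cfun"
  assumes D: "open D" and wi: "set_integrable lborel D w"
    and orth: "\<And>\<psi>. test_fun D \<psi> \<Longrightarrow> (\<forall>x. cmod (\<psi> x) \<le> 1) \<Longrightarrow> (LINT x:D|lborel. w x * \<psi> x) = 0"
  shows "AE x in lborel. x \<in> D \<longrightarrow> w x = 0"
proof (rule ae_zero_from_boxes[OF D wi])
  fix a b :: "real^'n" assume ab: "box a b \<subseteq> D"
  show "(LINT x:box a b|lborel. w x) = 0"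
    by (rule box_integral_zero[OF D wi _ ab]) (rule orth)
qed

lemma D_sets: "open D \<Longrightarrow> D \<in> sets lborel"
  by simp

lemma D_fin: "bounded D \<Longrightarrow> emeasure lborel D < \<infinity>"
  by (rule emeasure_bounded_finite)

lemma L2_L1:
  fixes v :: "'n::finite cfun"
  assumes D: "open D" "bounded D" and v: "in_L2 D v"
  shows "set_integrable lborel D v"
proof -
  have m: "(\<lambda>x. indicator D x *\<^sub>R v x) \<in> borel_measurable lborel"
    using v unfolding in_L2_def set_borel_measurable_def by auto
  have i1: "integrable lborel (\<lambda>x. indicator D x *\<^sub>R (cmod (v x))\<^sup>2)"
    using v unfolding in_L2_def set_integrable_def by auto
  have i2: "integrable lborel (indicat_real D)"
    by (rule integrable_real_indicator) (use D D_fin in auto)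
  have i3: "integrable lborel (\<lambda>x. indicat_real D x + indicator D x *\<^sub>R (cmod (v x))\<^sup>2)"
    using i1 i2 by simp
  show ?thesis unfolding set_integrable_def
  proof (rule Bochner_Integration.integrable_bound[OF i3 m], intro AE_I2)
    fix x
    have t0: "0 \<le> cmod (v x)" by simp
    have "0 \<le> (cmod (v x) - 1) * (cmod (v x) - 1)" by simp
    then have "0 \<le> cmod (v x) * cmod (v x) - 2 * cmod (v x) + 1" by (simp add: algebra_simps)
    then have "cmod (v x) \<le> 1 + cmod (v x) * cmod (v x)" using t0 by linarith
    then have "cmod (v x) \<le> 1 + (cmod (v x))\<^sup>2" by (simp add: power2_eq_square)
    then show "norm (indicator D x *\<^sub>R v x) \<le> norm (indicat_real D x + indicator D x *\<^sub>R (cmod (v x))\<^sup>2)"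
      by (auto simp: indicator_def)
  qed
qed

lemma cont_bounded_on:
  fixes g :: "'n::finite cfun"
  assumes "bounded D" "continuous_on UNIV g"
  shows "\<exists>B. \<forall>x\<in>D. cmod (g x) \<le> B"
proof -
  have "compact (closure D)" using assms(1) compact_closure by blast
  then have "compact (g ` closure D)"
    by (rule compact_continuous_image[OF continuous_on_subset[OF assms(2) subset_UNIV]])
  then obtain B where "\<forall>y\<in>g ` closure D. norm y \<le> B"
    using compact_imp_bounded bounded_iff by metis
  then show ?thesis using closure_subset by fastforce
qed

lemma set_integrable_mult_bounded:
  fixes f g :: "'n::finite cfun"
  assumes D: "open D" and f: "set_integrable lborel D f" and g: "g \<in> borel_measurable lborel"
    and B: "\<forall>x\<in>D. cmod (g x) \<le> B"
  shows "set_integrable lborel D (\<lambda>x. f x * g x)"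
proof -
  have fm: "(\<lambda>x. indicator D x *\<^sub>R f x) \<in> borel_measurable lborel"
    using f unfolding set_integrable_def by auto
  have m: "(\<lambda>x. indicator D x *\<^sub>R (f x * g x)) \<in> borel_measurable lborel"
  proof -
    have "(\<lambda>x. (indicator D x *\<^sub>R f x) * g x) \<in> borel_measurable lborel"
      using fm g by measurable
    then show ?thesis by (simp add: scaleR_conv_of_real mult.assoc)
  qed
  have i: "integrable lborel (\<lambda>x. B * norm (indicator D x *\<^sub>R f x))"
    using f unfolding set_integrable_def by (intro integrable_mult_right integrable_norm)
  show ?thesis unfolding set_integrable_def
  proof (rule Bochner_Integration.integrable_bound[OF i m], intro AE_I2)
    fix x
    show "norm (indicator D x *\<^sub>R (f x * g x)) \<le> norm (B * norm (indicator D x *\<^sub>R f x))"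
    proof (cases "x \<in> D")
      case True
      have "cmod (g x) \<le> B" using B True by blast
      then have "cmod (f x) * cmod (g x) \<le> cmod (f x) * B" by (rule mult_left_mono) simp
      then have "cmod (f x * g x) \<le> B * cmod (f x)"
        by (simp add: norm_mult mult.commute)
      then show ?thesis using True by auto
    qed simp
  qed
qed

lemma smooth_fun_pderiv: "smooth_fun \<psi> \<Longrightarrow> smooth_fun (pderiv_fun i \<psi>)"
  unfolding smooth_fun_def by blast

lemma smooth_fun_cont: "smooth_fun \<psi> \<Longrightarrow> continuous_on UNIV \<psi>"
  unfolding smooth_fun_def by (meson differentiable_imp_continuous_on)

lemma test_fun_pderiv_cont: "test_fun D \<psi> \<Longrightarrow> continuous_on UNIV (pderiv_fun i \<psi>)"
  unfolding test_fun_def by (meson smooth_fun_pderiv smooth_fun_cont)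

lemma cont_L2:
  fixes g :: "'n::finite cfun"
  assumes D: "open D" "bounded D" and g: "continuous_on UNIV g"
  shows "in_L2 D g"
proof -
  obtain B where B: "\<forall>x\<in>D. cmod (g x) \<le> B" using cont_bounded_on[OF D(2) g] by blast
  have gm: "g \<in> borel_measurable lborel" using g by (rule cont_meas)
  have i1: "set_integrable lborel D (\<lambda>x. complex_of_real 1)"
    unfolding set_integrable_def
    using integrable_real_indicator[OF D_sets[OF D(1)] D_fin[OF D(2)]]
    by (simp add: scaleR_conv_of_real integrable_of_real)
  have gg: "(\<lambda>x. complex_of_real ((cmod (g x))\<^sup>2)) \<in> borel_measurable lborel" using gm by measurable
  have "\<forall>x\<in>D. cmod (complex_of_real ((cmod (g x))\<^sup>2)) \<le> B * B"
  proof
    fix x assume "x \<in> D"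
    then have "cmod (g x) \<le> B" using B by blast
    then have "cmod (g x) * cmod (g x) \<le> B * B" by (intro mult_mono) (auto intro: order_trans[OF norm_ge_zero])
    then show "cmod (complex_of_real ((cmod (g x))\<^sup>2)) \<le> B * B"
      by (simp add: power2_eq_square norm_mult del: of_real_mult)
  qed
  then have "set_integrable lborel D (\<lambda>x. complex_of_real 1 * complex_of_real ((cmod (g x))\<^sup>2))"
    by (rule set_integrable_mult_bounded[OF D(1) i1 gg])
  then have "set_integrable lborel D (\<lambda>x. complex_of_real ((cmod (g x))\<^sup>2))"
    by simp
  then have "set_integrable lborel D (\<lambda>x. (cmod (g x))\<^sup>2)"
  proof -
    assume a: "set_integrable lborel D (\<lambda>x. complex_of_real ((cmod (g x))\<^sup>2))"
    have "(\<lambda>x. indicator D x *\<^sub>R complex_of_real ((cmod (g x))\<^sup>2)) = (\<lambda>x. complex_of_real (indicator D x *\<^sub>R (cmod (g x))\<^sup>2))"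
      by (auto simp: indicator_def)
    with a show ?thesis unfolding set_integrable_def using complex_of_real_integrable_eq by metis
  qed
  moreover have "set_borel_measurable lborel D g"
    unfolding set_borel_measurable_def by (intro borel_measurable_scaleR borel_measurable_indicator gm) (use D(1) in simp)
  ultimately show ?thesis unfolding in_L2_def by simp
qed


lemma meas_cnj: "f \<in> borel_measurable M \<Longrightarrow> (\<lambda>x. cnj (f x :: complex)) \<in> borel_measurable M"
  using borel_measurable_continuous_on[OF continuous_on_cnj[OF continuous_on_id]] by blast

lemma in_L2_meas: "in_L2 D u \<Longrightarrow> (\<lambda>x. indicator D x *\<^sub>R u x) \<in> borel_measurable lborel"
  unfolding in_L2_def set_borel_measurable_def by auto

lemma in_L2_int: "in_L2 D u \<Longrightarrow> integrable lborel (\<lambda>x. indicator D x *\<^sub>R (cmod (u x))\<^sup>2)"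
  unfolding in_L2_def set_integrable_def by auto

lemma sq_sum_le: "((p::real) + q)\<^sup>2 \<le> 2 * p\<^sup>2 + 2 * q\<^sup>2"
proof -
  have "0 \<le> (p - q)\<^sup>2" by simp
  then show ?thesis unfolding power2_diff power2_sum by linarith
qed

lemma cmod_comb_sq:
  fixes a b z w :: complex
  shows "(cmod (a * z + b * w))\<^sup>2 \<le> 2 * (cmod a)\<^sup>2 * (cmod z)\<^sup>2 + 2 * (cmod b)\<^sup>2 * (cmod w)\<^sup>2"
proof -
  have t: "cmod (a * z + b * w) \<le> cmod a * cmod z + cmod b * cmod w"
    by (metis norm_mult norm_triangle_ineq)
  have "(cmod (a * z + b * w))\<^sup>2 \<le> (cmod a * cmod z + cmod b * cmod w)\<^sup>2"
    by (rule power_mono[OF t]) simp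
  also have "\<dots> \<le> 2 * (cmod a * cmod z)\<^sup>2 + 2 * (cmod b * cmod w)\<^sup>2"
    by (rule sq_sum_le)
  finally show ?thesis by (simp only: power_mult_distrib mult.assoc)
qed

lemma cmod_prod_le: "cmod (f * cnj g) \<le> (cmod f)\<^sup>2 + (cmod g)\<^sup>2"
proof -
  have "0 \<le> (cmod f - cmod g)\<^sup>2" by simp
  then have a: "2 * cmod f * cmod g \<le> (cmod f)\<^sup>2 + (cmod g)\<^sup>2" unfolding power2_diff by linarith
  have "0 \<le> cmod f * cmod g" by simp
  with a have "cmod f * cmod g \<le> (cmod f)\<^sup>2 + (cmod g)\<^sup>2" by linarith
  then show ?thesis by (simp add: norm_mult)
qed

lemma in_L2_comb:
  fixes u u' :: "'n::finite cfun" and a b :: complex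
  assumes u: "in_L2 D u" and u': "in_L2 D u'"
  shows "in_L2 D (\<lambda>x. a * u x + b * u' x)"
proof -
  have m1: "(\<lambda>x. indicator D x *\<^sub>R u x) \<in> borel_measurable lborel" using u by (rule in_L2_meas)
  have m2: "(\<lambda>x. indicator D x *\<^sub>R u' x) \<in> borel_measurable lborel" using u' by (rule in_L2_meas)
  have eq: "(\<lambda>x. indicator D x *\<^sub>R (a * u x + b * u' x)) = (\<lambda>x. a * (indicator D x *\<^sub>R u x) + b * (indicator D x *\<^sub>R u' x))"
    by (auto simp: indicator_def)
  have m: "(\<lambda>x. indicator D x *\<^sub>R (a * u x + b * u' x)) \<in> borel_measurable lborel"
    unfolding eq using m1 m2 by measurable
  have m': "(\<lambda>x. indicator D x *\<^sub>R (cmod (a * u x + b * u' x))\<^sup>2) \<in> borel_measurable lborel"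
  proof -
    have "(\<lambda>x. (cmod (indicator D x *\<^sub>R (a * u x + b * u' x)))\<^sup>2) \<in> borel_measurable lborel"
      using m by measurable
    moreover have "(\<lambda>x. (cmod (indicator D x *\<^sub>R (a * u x + b * u' x)))\<^sup>2) = (\<lambda>x. indicator D x *\<^sub>R (cmod (a * u x + b * u' x))\<^sup>2)"
      by (auto simp: indicator_def)
    ultimately show ?thesis by simp
  qed
  have i: "integrable lborel (\<lambda>x. 2 * (cmod a)\<^sup>2 * (indicator D x *\<^sub>R (cmod (u x))\<^sup>2) + 2 * (cmod b)\<^sup>2 * (indicator D x *\<^sub>R (cmod (u' x))\<^sup>2))"
    using in_L2_int[OF u] in_L2_int[OF u'] by auto
  have "integrable lborel (\<lambda>x. indicator D x *\<^sub>R (cmod (a * u x + b * u' x))\<^sup>2)"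
  proof (rule Bochner_Integration.integrable_bound[OF i m'], intro AE_I2)
    fix x
    show "norm (indicator D x *\<^sub>R (cmod (a * u x + b * u' x))\<^sup>2) \<le> norm (2 * (cmod a)\<^sup>2 * (indicator D x *\<^sub>R (cmod (u x))\<^sup>2) + 2 * (cmod b)\<^sup>2 * (indicator D x *\<^sub>R (cmod (u' x))\<^sup>2))"
      using cmod_comb_sq[of a "u x" b "u' x"] by (auto simp: indicator_def)
  qed
  then show ?thesis using m unfolding in_L2_def set_integrable_def set_borel_measurable_def by simp
qed

lemma sq_norm_nonneg: "0 \<le> sq_norm_L2 D u"
  unfolding sq_norm_L2_def set_lebesgue_integral_def by (intro integral_nonneg_AE) auto

lemma sq_norm_comb:
  fixes u u' :: "'n::finite cfun" and a b :: complex
  assumes u: "in_L2 D u" and u': "in_L2 D u'"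
  shows "sq_norm_L2 D (\<lambda>x. a * u x + b * u' x) \<le> 2 * (cmod a)\<^sup>2 * sq_norm_L2 D u + 2 * (cmod b)\<^sup>2 * sq_norm_L2 D u'"
proof -
  have i0: "integrable lborel (\<lambda>x. indicator D x *\<^sub>R (cmod (a * u x + b * u' x))\<^sup>2)"
    using in_L2_int[OF in_L2_comb[OF u u']] .
  have i1: "integrable lborel (\<lambda>x. indicator D x *\<^sub>R (cmod (u x))\<^sup>2)" using in_L2_int[OF u] .
  have i2: "integrable lborel (\<lambda>x. indicator D x *\<^sub>R (cmod (u' x))\<^sup>2)" using in_L2_int[OF u'] .
  have "sq_norm_L2 D (\<lambda>x. a * u x + b * u' x) \<le> integral\<^sup>L lborel (\<lambda>x. 2 * (cmod a)\<^sup>2 * (indicator D x *\<^sub>R (cmod (u x))\<^sup>2) + 2 * (cmod b)\<^sup>2 * (indicator D x *\<^sub>R (cmod (u' x))\<^sup>2))"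
    unfolding sq_norm_L2_def set_lebesgue_integral_def
  proof (rule integral_mono[OF i0])
    show "integrable lborel (\<lambda>x. 2 * (cmod a)\<^sup>2 * (indicator D x *\<^sub>R (cmod (u x))\<^sup>2) + 2 * (cmod b)\<^sup>2 * (indicator D x *\<^sub>R (cmod (u' x))\<^sup>2))"
      using i1 i2 by auto
    fix x
    show "indicator D x *\<^sub>R (cmod (a * u x + b * u' x))\<^sup>2 \<le> 2 * (cmod a)\<^sup>2 * (indicator D x *\<^sub>R (cmod (u x))\<^sup>2) + 2 * (cmod b)\<^sup>2 * (indicator D x *\<^sub>R (cmod (u' x))\<^sup>2)"
      using cmod_comb_sq[of a "u x" b "u' x"] by (auto simp: indicator_def)
  qed
  also have "\<dots> = 2 * (cmod a)\<^sup>2 * sq_norm_L2 D u + 2 * (cmod b)\<^sup>2 * sq_norm_L2 D u'"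
    unfolding sq_norm_L2_def set_lebesgue_integral_def using i1 i2 by simp
  finally show ?thesis .
qed

lemma L2_prod_int:
  fixes f g :: "'n::finite cfun"
  assumes f: "in_L2 D f" and g: "in_L2 D g"
  shows "set_integrable lborel D (\<lambda>x. f x * cnj (g x))"
proof -
  have m: "(\<lambda>x. indicator D x *\<^sub>R (f x * cnj (g x))) \<in> borel_measurable lborel"
  proof -
    have "(\<lambda>x. (indicator D x *\<^sub>R f x) * cnj (indicator D x *\<^sub>R g x)) \<in> borel_measurable lborel"
      using in_L2_meas[OF f] meas_cnj[OF in_L2_meas[OF g]] by measurable
    moreover have "(\<lambda>x. (indicator D x *\<^sub>R f x) * cnj (indicator D x *\<^sub>R g x)) = (\<lambda>x. indicator D x *\<^sub>R (f x * cnj (g x)))"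
      by (auto simp: indicator_def)
    ultimately show ?thesis by simp
  qed
  have i: "integrable lborel (\<lambda>x. indicator D x *\<^sub>R (cmod (f x))\<^sup>2 + indicator D x *\<^sub>R (cmod (g x))\<^sup>2)"
    using in_L2_int[OF f] in_L2_int[OF g] by auto
  show ?thesis unfolding set_integrable_def
  proof (rule Bochner_Integration.integrable_bound[OF i m], intro AE_I2)
    fix x
    show "norm (indicator D x *\<^sub>R (f x * cnj (g x))) \<le> norm (indicator D x *\<^sub>R (cmod (f x))\<^sup>2 + indicator D x *\<^sub>R (cmod (g x))\<^sup>2)"
      using cmod_prod_le[of "f x" "g x"] by (auto simp: indicator_def)
  qed
qed

lemma test_bounded_meas:
  fixes \<psi> :: "'n::finite cfun"
  assumes D: "bounded D" and t: "test_fun D \<psi>"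
  shows "\<psi> \<in> borel_measurable lborel" "\<exists>B. \<forall>x\<in>D. cmod (\<psi> x) \<le> B"
    "pderiv_fun i \<psi> \<in> borel_measurable lborel" "\<exists>B. \<forall>x\<in>D. cmod (pderiv_fun i \<psi> x) \<le> B"
  using test_fun_cont[OF t] test_fun_pderiv_cont[OF t] cont_meas cont_bounded_on[OF D] by blast+

lemma int_with_test:
  fixes f \<psi> :: "'n::finite cfun"
  assumes D: "open D" "bounded D" and f: "in_L2 D f" and t: "test_fun D \<psi>"
  shows "set_integrable lborel D (\<lambda>x. f x * \<psi> x)" "set_integrable lborel D (\<lambda>x. f x * pderiv_fun i \<psi> x)"
proof -
  have f1: "set_integrable lborel D f" by (rule L2_L1[OF D f])
  obtain B where B: "\<forall>x\<in>D. cmod (\<psi> x) \<le> B" using test_bounded_meas[OF D(2) t] by blast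
  obtain B' where B': "\<forall>x\<in>D. cmod (pderiv_fun i \<psi> x) \<le> B'" using test_bounded_meas[OF D(2) t] by blast
  show "set_integrable lborel D (\<lambda>x. f x * \<psi> x)"
    by (rule set_integrable_mult_bounded[OF D(1) f1 test_bounded_meas(1)[OF D(2) t] B])
  show "set_integrable lborel D (\<lambda>x. f x * pderiv_fun i \<psi> x)"
    by (rule set_integrable_mult_bounded[OF D(1) f1 test_bounded_meas(3)[OF D(2) t] B'])
qed

lemma set_int_comb:
  fixes f g :: "'n::finite cfun"
  assumes "set_integrable lborel D f" "set_integrable lborel D g"
  shows "(LINT x:D|lborel. a * f x + b * g x) = a * (LINT x:D|lborel. f x) + b * (LINT x:D|lborel. g x)"
proof -
  have "(LINT x:D|lborel. a * f x + b * g x) = (LINT x:D|lborel. a * f x) + (LINT x:D|lborel. b * g x)"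
    by (rule set_integral_add) (use assms in \<open>auto intro: set_integrable_mult_right\<close>)
  then show ?thesis by (simp add: set_integral_mult_right)
qed

lemma weak_deriv_comb:
  fixes u u' v v' :: "'n::finite cfun" and a b :: complex
  assumes D: "open D" "bounded D" and u: "in_L2 D u" and u': "in_L2 D u'"
    and w: "weak_deriv D u i v" and w': "weak_deriv D u' i v'"
  shows "weak_deriv D (\<lambda>x. a * u x + b * u' x) i (\<lambda>x. a * v x + b * v' x)"
  unfolding weak_deriv_def
proof (intro conjI allI impI)
  have v: "in_L2 D v" and v': "in_L2 D v'" using w w' unfolding weak_deriv_def by auto
  show "in_L2 D (\<lambda>x. a * v x + b * v' x)" by (rule in_L2_comb[OF v v'])
  fix \<psi> assume t: "test_fun D \<psi>"
  have "(LINT x:D|lborel. (a * u x + b * u' x) * pderiv_fun i \<psi> x)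
      = (LINT x:D|lborel. a * (u x * pderiv_fun i \<psi> x) + b * (u' x * pderiv_fun i \<psi> x))"
    by (simp add: algebra_simps)
  also have "\<dots> = a * (LINT x:D|lborel. u x * pderiv_fun i \<psi> x) + b * (LINT x:D|lborel. u' x * pderiv_fun i \<psi> x)"
    by (rule set_int_comb) (use int_with_test[OF D u t] int_with_test[OF D u' t] in auto)
  also have "\<dots> = a * (- (LINT x:D|lborel. v x * \<psi> x)) + b * (- (LINT x:D|lborel. v' x * \<psi> x))"
    using w w' t unfolding weak_deriv_def by simp
  also have "\<dots> = - (a * (LINT x:D|lborel. v x * \<psi> x) + b * (LINT x:D|lborel. v' x * \<psi> x))"
    by (simp add: algebra_simps)
  also have "a * (LINT x:D|lborel. v x * \<psi> x) + b * (LINT x:D|lborel. v' x * \<psi> x)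
      = (LINT x:D|lborel. a * (v x * \<psi> x) + b * (v' x * \<psi> x))"
    by (rule set_int_comb[symmetric]) (use int_with_test[OF D v t] int_with_test[OF D v' t] in auto)
  also have "(LINT x:D|lborel. a * (v x * \<psi> x) + b * (v' x * \<psi> x)) = (LINT x:D|lborel. (a * v x + b * v' x) * \<psi> x)"
    by (simp add: algebra_simps)
  finally show "(LINT x:D|lborel. (a * u x + b * u' x) * pderiv_fun i \<psi> x) = - (LINT x:D|lborel. (a * v x + b * v' x) * \<psi> x)" .
qed

lemma weak_deriv_unique:
  fixes u v v' :: "'n::finite cfun"
  assumes D: "open D" "bounded D"
    and w: "weak_deriv D u i v" and w': "weak_deriv D u i v'"
  shows "AE x in lborel. x \<in> D \<longrightarrow> v x = v' x"
proof -
  have v: "in_L2 D v" and v': "in_L2 D v'" using w w' unfolding weak_deriv_def by auto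
  have wi: "set_integrable lborel D (\<lambda>x. v x - v' x)"
    using L2_L1[OF D v] L2_L1[OF D v'] by (rule set_integral_diff(1))
  have "AE x in lborel. x \<in> D \<longrightarrow> v x - v' x = 0"
  proof (rule fundamental_lemma[OF D(1) wi])
    fix \<psi> assume t: "test_fun D \<psi>"
    have "(LINT x:D|lborel. (v x - v' x) * \<psi> x) = (LINT x:D|lborel. v x * \<psi> x) - (LINT x:D|lborel. v' x * \<psi> x)"
    proof -
      have "(LINT x:D|lborel. (v x - v' x) * \<psi> x) = (LINT x:D|lborel. v x * \<psi> x - v' x * \<psi> x)"
        by (simp add: algebra_simps)
      also have "\<dots> = (LINT x:D|lborel. v x * \<psi> x) - (LINT x:D|lborel. v' x * \<psi> x)"
        by (rule set_integral_diff(2)) (use int_with_test[OF D v t] int_with_test[OF D v' t] in auto)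
      finally show ?thesis .
    qed
    also have "\<dots> = 0" using w w' t unfolding weak_deriv_def by (metis diff_self minus_equation_iff)
    finally show "(LINT x:D|lborel. (v x - v' x) * \<psi> x) = 0" .
  qed
  then show ?thesis by eventually_elim simp
qed

lemma wgrad_weak: "weak_deriv D u i v \<Longrightarrow> weak_deriv D u i (wgrad D u i)"
  using someI[of "weak_deriv D u i" v] unfolding wgrad_def by blast

lemma wgrad_ae:
  assumes D: "open D" "bounded D" and w: "weak_deriv D u i v"
  shows "AE x in lborel. x \<in> D \<longrightarrow> wgrad D u i x = v x"
  by (rule weak_deriv_unique[OF D wgrad_weak[OF w] w])

lemma sq_norm_cong:
  assumes f: "in_L2 D f" and g: "in_L2 D g" and ae: "AE x in lborel. x \<in> D \<longrightarrow> f x = g x"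
  shows "sq_norm_L2 D f = sq_norm_L2 D g"
  unfolding sq_norm_L2_def set_lebesgue_integral_def
proof (rule integral_cong_AE)
  show "(\<lambda>x. indicat_real D x *\<^sub>R (cmod (f x))\<^sup>2) \<in> borel_measurable lborel"
    using in_L2_int[OF f] by auto
  show "(\<lambda>x. indicat_real D x *\<^sub>R (cmod (g x))\<^sup>2) \<in> borel_measurable lborel"
    using in_L2_int[OF g] by auto
  show "AE x in lborel. indicat_real D x *\<^sub>R (cmod (f x))\<^sup>2 = indicat_real D x *\<^sub>R (cmod (g x))\<^sup>2"
    using ae by eventually_elim (auto simp: indicator_def)
qed

lemma diff_at: "g differentiable_on UNIV \<Longrightarrow> g differentiable (at x)"
  unfolding differentiable_on_def by simp

lemma frechet_comb:
  fixes g h :: "'n::finite cfun"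
  assumes "g differentiable_on UNIV" "h differentiable_on UNIV"
  shows "((\<lambda>x. c * g x + d * h x) has_derivative (\<lambda>v. c * frechet_derivative g (at x) v + d * frechet_derivative h (at x) v)) (at x)"
proof -
  have "(g has_derivative frechet_derivative g (at x)) (at x)"
    using diff_at[OF assms(1)] frechet_derivative_works by blast
  moreover have "(h has_derivative frechet_derivative h (at x)) (at x)"
    using diff_at[OF assms(2)] frechet_derivative_works by blast
  ultimately show ?thesis
    by (intro has_derivative_add has_derivative_mult_right)
qed

lemma smooth_fun_comb:
  fixes \<psi> \<psi>' :: "'n::finite cfun"
  assumes s1: "smooth_fun \<psi>" and s2: "smooth_fun \<psi>'"
  shows "smooth_fun (\<lambda>x. a * \<psi> x + b * \<psi>' x)"
proof -
  obtain F where F: "\<psi> \<in> F" "\<forall>g\<in>F. g differentiable_on UNIV \<and> (\<forall>i. pderiv_fun i g \<in> F)"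
    using s1 unfolding smooth_fun_def by blast
  obtain F' where F': "\<psi>' \<in> F'" "\<forall>g\<in>F'. g differentiable_on UNIV \<and> (\<forall>i. pderiv_fun i g \<in> F')"
    using s2 unfolding smooth_fun_def by blast
  let ?G = "{(\<lambda>x. c * g x + d * h x) | c d g h. g \<in> F \<and> h \<in> F'}"
  show ?thesis unfolding smooth_fun_def
  proof (intro exI[of _ ?G] conjI ballI allI)
    show "(\<lambda>x. a * \<psi> x + b * \<psi>' x) \<in> ?G" using F F' by blast
  next
    fix f assume "f \<in> ?G"
    then obtain c d g h where f: "f = (\<lambda>x. c * g x + d * h x)" and g: "g \<in> F" and h: "h \<in> F'" by blast
    have gd: "g differentiable_on UNIV" and hd: "h differentiable_on UNIV" using F F' g h by auto
    show "f differentiable_on UNIV"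
      unfolding f differentiable_on_def differentiable_def using frechet_comb[OF gd hd] by blast
    fix i
    have "pderiv_fun i f = (\<lambda>x. c * pderiv_fun i g x + d * pderiv_fun i h x)"
    proof
      fix x
      have eq: "(\<lambda>v. c * frechet_derivative g (at x) v + d * frechet_derivative h (at x) v) = frechet_derivative f (at x)"
        unfolding f by (rule frechet_derivative_at[OF frechet_comb[OF gd hd]])
      show "pderiv_fun i f x = c * pderiv_fun i g x + d * pderiv_fun i h x"
        unfolding pderiv_fun_def using fun_cong[OF eq, of "axis i 1", symmetric] by simp
    qed
    moreover have "pderiv_fun i g \<in> F" "pderiv_fun i h \<in> F'" using F F' g h by auto
    ultimately show "pderiv_fun i f \<in> ?G" by blast
  qed
qed

lemma test_fun_comb:
  fixes \<psi> \<psi>' :: "'n::finite cfun"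
  assumes t1: "test_fun D \<psi>" and t2: "test_fun D \<psi>'"
  shows "test_fun D (\<lambda>x. a * \<psi> x + b * \<psi>' x)"
proof -
  let ?S = "{x. a * \<psi> x + b * \<psi>' x \<noteq> 0}"
  let ?A = "closure {x. \<psi> x \<noteq> 0}" and ?B = "closure {x. \<psi>' x \<noteq> 0}"
  have a1: "smooth_fun \<psi>" "compact ?A" "?A \<subseteq> D" using t1 unfolding test_fun_def by (simp_all only:)
  have a2: "smooth_fun \<psi>'" "compact ?B" "?B \<subseteq> D" using t2 unfolding test_fun_def by (simp_all only:)
  have s0: "?S \<subseteq> {x. \<psi> x \<noteq> 0} \<union> {x. \<psi>' x \<noteq> 0}" by auto
  have sub: "closure ?S \<subseteq> ?A \<union> ?B"
    using closure_mono[OF s0] unfolding closure_Un .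
  have c: "compact (?A \<union> ?B)" using a1(2) a2(2) by (rule compact_Un)
  have "compact (closure ?S)"
  proof -
    have "compact ((?A \<union> ?B) \<inter> closure ?S)"
      by (rule compact_Int_closed[OF c closed_closure])
    moreover have "(?A \<union> ?B) \<inter> closure ?S = closure ?S"
      using sub by (rule Int_absorb1)
    ultimately show ?thesis by simp
  qed
  moreover have "closure ?S \<subseteq> D" using sub a1(3) a2(3) by (meson Un_least order_trans)
  moreover have "smooth_fun (\<lambda>x. a * \<psi> x + b * \<psi>' x)"
    using a1(1) a2(1) by (rule smooth_fun_comb)
  ultimately show ?thesis unfolding test_fun_def by (simp only: simp_thms)
qed

lemma test_fun_zero_outside:
  assumes "test_fun D \<psi>" "x \<notin> D" shows "\<psi> x = 0"
proof (rule ccontr)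
  assume "\<psi> x \<noteq> 0"
  then have "x \<in> closure {x. \<psi> x \<noteq> 0}" using closure_subset by fastforce
  then show False using assms unfolding test_fun_def by blast
qed

lemma line_deriv:
  fixes \<psi> :: "'n::finite cfun"
  assumes s: "smooth_fun \<psi>"
  shows "((\<lambda>t. \<psi> (y + t *\<^sub>R e)) has_vector_derivative frechet_derivative \<psi> (at (y + t *\<^sub>R e)) e) (at t)"
proof -
  have d: "\<psi> differentiable_on UNIV" using s unfolding smooth_fun_def by blast
  have D: "(\<psi> has_derivative frechet_derivative \<psi> (at (y + t *\<^sub>R e))) (at (y + t *\<^sub>R e))"
    using diff_at[OF d] frechet_derivative_works by blast
  have L: "((\<lambda>t. y + t *\<^sub>R e) has_derivative (\<lambda>s. s *\<^sub>R e)) (at t)"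
    by (auto intro!: derivative_eq_intros)
  have "((\<lambda>t. \<psi> (y + t *\<^sub>R e)) has_derivative (\<lambda>s. frechet_derivative \<psi> (at (y + t *\<^sub>R e)) (s *\<^sub>R e))) (at t)"
    using has_derivative_compose[OF L D] by simp
  moreover have "(\<lambda>s. frechet_derivative \<psi> (at (y + t *\<^sub>R e)) (s *\<^sub>R e)) = (\<lambda>s. s *\<^sub>R frechet_derivative \<psi> (at (y + t *\<^sub>R e)) e)"
    using linear_cmul[OF has_derivative_linear[OF D]] by simp
  ultimately show ?thesis unfolding has_vector_derivative_def by simp
qed

lemma vd_seq:
  fixes g :: "real \<Rightarrow> complex"
  assumes "(g has_vector_derivative g') (at 0)"
  shows "(\<lambda>n. real (Suc n) *\<^sub>R (g (1 / real (Suc n)) - g 0)) \<longlonglongrightarrow> g'"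
proof -
  have "((\<lambda>y. norm (g y - g 0 - (y - 0) *\<^sub>R g') / norm (y - 0)) \<longlongrightarrow> 0) (at 0)"
    using assms unfolding has_vector_derivative_def has_derivative_iff_norm by blast
  then have l1: "((\<lambda>y. norm (g y - g 0 - (y - 0) *\<^sub>R g') / norm (y - 0)) \<longlongrightarrow> 0) (at_right 0)"
    using filterlim_at_split by blast
  have tn: "filterlim (\<lambda>n. 1 / real (Suc n)) (at_right 0) sequentially"
  proof (rule tendsto_imp_filterlim_at_right)
    show "(\<lambda>n. 1 / real (Suc n)) \<longlonglongrightarrow> 0" by (rule LIMSEQ_Suc[OF lim_const_over_n])
    show "\<forall>\<^sub>F n in sequentially. 0 < 1 / real (Suc n)" by simp
  qed
  have l2: "(\<lambda>n. norm (g (1 / real (Suc n)) - g 0 - (1 / real (Suc n) - 0) *\<^sub>R g') / norm (1 / real (Suc n) - 0)) \<longlonglongrightarrow> 0"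
    by (rule filterlim_compose[OF l1 tn])
  have eq: "norm (g (1 / real (Suc n)) - g 0 - (1 / real (Suc n) - 0) *\<^sub>R g') / norm (1 / real (Suc n) - 0)
      = norm (real (Suc n) *\<^sub>R (g (1 / real (Suc n)) - g 0) - g')" for n
  proof -
    have "norm (real (Suc n) *\<^sub>R (g (1 / real (Suc n)) - g 0) - g')
        = norm (real (Suc n) *\<^sub>R (g (1 / real (Suc n)) - g 0 - (1 / real (Suc n)) *\<^sub>R g'))"
      by (simp add: scaleR_diff_right)
    also have "\<dots> = real (Suc n) * norm (g (1 / real (Suc n)) - g 0 - (1 / real (Suc n)) *\<^sub>R g')"
      by simp
    finally show ?thesis by (simp add: divide_inverse mult.commute)
  qed
  have "(\<lambda>n. norm (real (Suc n) *\<^sub>R (g (1 / real (Suc n)) - g 0) - g')) \<longlonglongrightarrow> 0"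
    using l2 unfolding eq .
  then show ?thesis
    using Lim_null tendsto_norm_zero_iff by blast
qed

lemma cont_zero_outside_int:
  fixes g :: "'n::finite cfun"
  assumes D: "open D" "bounded D" and g: "continuous_on UNIV g" and z: "\<And>x. x \<notin> D \<Longrightarrow> g x = 0"
  shows "integrable lborel g"
proof -
  have "set_integrable lborel D g" by (rule L2_L1[OF D cont_L2[OF D g]])
  moreover have "(\<lambda>x. indicator D x *\<^sub>R g x) = g" using z by (auto simp: indicator_def)
  ultimately show ?thesis unfolding set_integrable_def by simp
qed

lemma shift_integral:
  fixes f :: "'n::finite cfun"
  assumes fm: "f \<in> borel_measurable lborel"
  shows "integral\<^sup>L lborel (\<lambda>y. f (c + y)) = integral\<^sup>L lborel f"
    and "integrable lborel f \<Longrightarrow> integrable lborel (\<lambda>y. f (c + y))"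
proof -
  have T: "((+) c) \<in> lborel \<rightarrow>\<^sub>M borel" by simp
  have fm': "f \<in> borel_measurable borel" using fm by simp
  show "integral\<^sup>L lborel (\<lambda>y. f (c + y)) = integral\<^sup>L lborel f"
    using integral_distr[OF T fm'] lborel_distr_plus[of c] by simp
  show "integrable lborel f \<Longrightarrow> integrable lborel (\<lambda>y. f (c + y))"
    using integrable_distr_eq[OF T fm'] lborel_distr_plus[of c] by simp
qed


lemma ibp_total:
  fixes f h :: "'n::finite cfun"
  assumes D: "open D" "bounded D"
    and fc: "continuous_on UNIV f" and hc: "continuous_on UNIV h"
    and fz: "\<And>x. x \<notin> D \<Longrightarrow> f x = 0" and hz: "\<And>x. x \<notin> D \<Longrightarrow> h x = 0"
    and dl: "\<And>y t. ((\<lambda>t. f (y + t *\<^sub>R e)) has_vector_derivative h (y + t *\<^sub>R e)) (at t)"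
    and ne: "norm e = 1"
  shows "integral\<^sup>L lborel h = 0"
proof -
  obtain M0 where M0: "\<forall>x\<in>D. cmod (h x) \<le> M0" using cont_bounded_on[OF D(2) hc] by blast
  define M where "M = max M0 0"
  have M: "cmod (h x) \<le> M" for x using M0 hz[of x] unfolding M_def by (cases "x \<in> D") force+
  have M_nn: "0 \<le> M" unfolding M_def by simp
  obtain R where R: "\<forall>x\<in>D. norm x \<le> R" using D(2) bounded_iff by blast
  have fm: "f \<in> borel_measurable lborel" using fc by (rule cont_meas)
  have hm: "h \<in> borel_measurable lborel" using hc by (rule cont_meas)
  have fi: "integrable lborel f" by (rule cont_zero_outside_int[OF D fc fz])
  have mvt: "cmod (f (y + t *\<^sub>R e) - f y) \<le> M * t" if t: "t > 0" for y t
  proof -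
    have cont: "continuous_on {0..t} (\<lambda>t. f (y + t *\<^sub>R e))"
      by (rule continuous_on_vector_derivative) (use dl has_vector_derivative_at_within in blast)
    obtain \<xi> where "norm (f (y + t *\<^sub>R e) - f (y + 0 *\<^sub>R e)) \<le> norm ((t - 0) *\<^sub>R h (y + \<xi> *\<^sub>R e))"
      using mvt_general[OF t cont, of "\<lambda>x s. s *\<^sub>R h (y + x *\<^sub>R e)"] dl
      unfolding has_vector_derivative_def by blast
    also have "\<dots> = t * cmod (h (y + \<xi> *\<^sub>R e))" using t by simp
    also have "\<dots> \<le> t * M" using t M by (intro mult_left_mono) auto
    finally show ?thesis by (simp add: mult.commute)
  qed
  define s where "s = (\<lambda>n y. real (Suc n) *\<^sub>R (f (y + (1 / real (Suc n)) *\<^sub>R e) - f y))"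
  have sm: "s n \<in> borel_measurable lborel" for n
    unfolding s_def using fm by measurable
  have lim: "AE y in lborel. (\<lambda>n. s n y) \<longlonglongrightarrow> h y"
  proof (rule AE_I2)
    fix y
    have "((\<lambda>t. f (y + t *\<^sub>R e)) has_vector_derivative h y) (at 0)"
      using dl[of y 0] by simp
    from vd_seq[OF this] show "(\<lambda>n. s n y) \<longlonglongrightarrow> h y" unfolding s_def by simp
  qed
  define w where "w = (\<lambda>y. M * indicator (cball (0::real^'n) (R + 1)) y)"
  have wi: "integrable lborel w"
    unfolding w_def
    by (intro integrable_mult_right integrable_real_indicator) (auto intro: emeasure_bounded_finite[of "cball 0 (R + 1)", simplified])
  have bd: "AE y in lborel. norm (s n y) \<le> w y" for n
  proof (rule AE_I2)
    fix y
    let ?t = "1 / real (Suc n)"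
    have tpos: "?t > 0" by simp
    have tle: "?t \<le> 1" by simp
    show "norm (s n y) \<le> w y"
    proof (cases "y \<in> cball 0 (R + 1)")
      case True
      have "norm (s n y) = real (Suc n) * cmod (f (y + ?t *\<^sub>R e) - f y)" unfolding s_def by simp
      also have "\<dots> \<le> real (Suc n) * (M * ?t)" by (rule mult_left_mono[OF mvt[OF tpos]]) simp
      also have "\<dots> = M" by simp
      finally show ?thesis using True unfolding w_def by simp
    next
      case False
      then have ny: "norm y > R + 1" by (simp add: dist_norm)
      have "y \<notin> D" using R ny by force
      moreover have "y + ?t *\<^sub>R e \<notin> D"
      proof
        assume "y + ?t *\<^sub>R e \<in> D"
        then have "norm (y + ?t *\<^sub>R e) \<le> R" using R by blast
        moreover have "norm y \<le> norm (y + ?t *\<^sub>R e) + norm (?t *\<^sub>R e)"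
          by (metis add_diff_cancel norm_triangle_ineq4)
        moreover have "norm (?t *\<^sub>R e) \<le> 1" using ne tle by simp
        ultimately show False using ny by linarith
      qed
      ultimately have "s n y = 0" unfolding s_def using fz by simp
      then show ?thesis using False M_nn unfolding w_def by simp
    qed
  qed
  have conv: "(\<lambda>n. integral\<^sup>L lborel (s n)) \<longlonglongrightarrow> integral\<^sup>L lborel h"
    by (rule integral_dominated_convergence[OF hm sm wi lim bd])
  have "integral\<^sup>L lborel (s n) = 0" for n
  proof -
    let ?c = "(1 / real (Suc n)) *\<^sub>R e"
    have sh: "integral\<^sup>L lborel (\<lambda>y. f (?c + y)) = integral\<^sup>L lborel f"
      "integrable lborel (\<lambda>y. f (?c + y))"
      using shift_integral[OF fm, of ?c] fi by auto
    have "integral\<^sup>L lborel (s n) = real (Suc n) *\<^sub>R (integral\<^sup>L lborel (\<lambda>y. f (?c + y)) - integral\<^sup>L lborel f)"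
      unfolding s_def using sh(2) fi by (simp add: add.commute)
    then show ?thesis using sh(1) by simp
  qed
  then have "(\<lambda>n. integral\<^sup>L lborel (s n)) \<longlonglongrightarrow> 0" by simp
  with conv show ?thesis by (rule LIMSEQ_unique)
qed


lemma test_weak_deriv:
  fixes \<psi> :: "'n::finite cfun"
  assumes D: "open D" "bounded D" and t: "test_fun D \<psi>"
  shows "weak_deriv D \<psi> i (pderiv_fun i \<psi>)"
  unfolding weak_deriv_def
proof (intro conjI allI impI)
  show "in_L2 D (pderiv_fun i \<psi>)" by (rule cont_L2[OF D test_fun_pderiv_cont[OF t]])
  fix \<eta> assume t2: "test_fun D \<eta>"
  define e :: "real^'n" where "e = axis i 1"
  define f where "f = (\<lambda>x. \<psi> x * \<eta> x)"
  define h where "h = (\<lambda>x. pderiv_fun i \<psi> x * \<eta> x + \<psi> x * pderiv_fun i \<eta> x)"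
  have s1: "smooth_fun \<psi>" and s2: "smooth_fun \<eta>" using t t2 unfolding test_fun_def by auto
  have fc: "continuous_on UNIV f" unfolding f_def
    using test_fun_cont[OF t] test_fun_cont[OF t2] by (intro continuous_on_mult)
  have hc: "continuous_on UNIV h" unfolding h_def
    using test_fun_cont[OF t] test_fun_cont[OF t2] test_fun_pderiv_cont[OF t] test_fun_pderiv_cont[OF t2]
    by (intro continuous_on_mult continuous_on_add)
  have fz: "f x = 0" if "x \<notin> D" for x unfolding f_def using test_fun_zero_outside[OF t that] by simp
  have hz: "h x = 0" if "x \<notin> D" for x unfolding h_def
    using test_fun_zero_outside[OF t that] test_fun_zero_outside[OF t2 that] by simp
  have dl: "((\<lambda>t. f (y + t *\<^sub>R e)) has_vector_derivative h (y + t *\<^sub>R e)) (at t)" for y t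
  proof -
    have a: "((\<lambda>t. \<psi> (y + t *\<^sub>R e)) has_vector_derivative frechet_derivative \<psi> (at (y + t *\<^sub>R e)) e) (at t)"
      by (rule line_deriv[OF s1])
    have b: "((\<lambda>t. \<eta> (y + t *\<^sub>R e)) has_vector_derivative frechet_derivative \<eta> (at (y + t *\<^sub>R e)) e) (at t)"
      by (rule line_deriv[OF s2])
    have "((\<lambda>t. \<psi> (y + t *\<^sub>R e) * \<eta> (y + t *\<^sub>R e)) has_vector_derivative
       \<psi> (y + t *\<^sub>R e) * frechet_derivative \<eta> (at (y + t *\<^sub>R e)) e + frechet_derivative \<psi> (at (y + t *\<^sub>R e)) e * \<eta> (y + t *\<^sub>R e)) (at t)"
      by (rule has_vector_derivative_mult[OF a b])
    then show ?thesis unfolding f_def h_def pderiv_fun_def e_def by (simp add: add.commute)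
  qed
  have ne: "norm e = 1" unfolding e_def by simp
  have h0: "integral\<^sup>L lborel h = 0"
    by (rule ibp_total[OF D fc hc _ _ dl ne]) (auto simp: fz hz)
  have "(LINT x:D|lborel. h x) = integral\<^sup>L lborel h"
    unfolding set_lebesgue_integral_def
  proof (rule Bochner_Integration.integral_cong)
    fix x show "indicator D x *\<^sub>R h x = h x" using hz[of x] by (cases "x \<in> D") auto
  qed simp
  moreover have "(LINT x:D|lborel. h x) = (LINT x:D|lborel. pderiv_fun i \<psi> x * \<eta> x) + (LINT x:D|lborel. \<psi> x * pderiv_fun i \<eta> x)"
    unfolding h_def
    by (rule set_integral_add(2))
       (use int_with_test(1)[OF D cont_L2[OF D test_fun_pderiv_cont[OF t]] t2]
            int_with_test(2)[OF D cont_L2[OF D test_fun_cont[OF t]] t2] in auto)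
  ultimately show "(LINT x:D|lborel. \<psi> x * pderiv_fun i \<eta> x) = - (LINT x:D|lborel. pderiv_fun i \<psi> x * \<eta> x)"
    using h0 by (simp add: eq_neg_iff_add_eq_0 add.commute)
qed

definition H1sq :: "(real^'n::finite) set \<Rightarrow> 'n cfun \<Rightarrow> real" where
  "H1sq D u = sq_norm_L2 D u + (\<Sum>i\<in>UNIV. sq_norm_L2 D (wgrad D u i))"

lemma H1sq_nonneg: "0 \<le> H1sq D u"
  unfolding H1sq_def by (intro add_nonneg_nonneg sum_nonneg sq_norm_nonneg)

lemma H1norm_sq: "H1norm D u = sqrt (H1sq D u)"
  unfolding H1norm_def H1sq_def ..

lemma H1sq_comb:
  fixes E E' :: "'n::finite cfun" and a b :: complex
  assumes D: "open D" "bounded D" and E: "in_L2 D E" and E': "in_L2 D E'"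
    and wE: "\<And>i. \<exists>v. weak_deriv D E i v" and wE': "\<And>i. \<exists>v. weak_deriv D E' i v"
  shows "H1sq D (\<lambda>x. a * E x + b * E' x) \<le> 2 * (cmod a)\<^sup>2 * H1sq D E + 2 * (cmod b)\<^sup>2 * H1sq D E'"
proof -
  let ?G = "\<lambda>x. a * E x + b * E' x"
  have W: "weak_deriv D E i (wgrad D E i)" for i using wE wgrad_weak by blast
  have W': "weak_deriv D E' i (wgrad D E' i)" for i using wE' wgrad_weak by blast
  have WG: "weak_deriv D ?G i (\<lambda>x. a * wgrad D E i x + b * wgrad D E' i x)" for i
    by (rule weak_deriv_comb[OF D E E' W W'])
  have each: "sq_norm_L2 D (wgrad D ?G i) \<le> 2 * (cmod a)\<^sup>2 * sq_norm_L2 D (wgrad D E i) + 2 * (cmod b)\<^sup>2 * sq_norm_L2 D (wgrad D E' i)" for i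
  proof -
    have L1: "in_L2 D (wgrad D E i)" using W[of i] unfolding weak_deriv_def by auto
    have L2: "in_L2 D (wgrad D E' i)" using W'[of i] unfolding weak_deriv_def by auto
    have LG: "in_L2 D (wgrad D ?G i)" using wgrad_weak[OF WG[of i]] unfolding weak_deriv_def by auto
    have "sq_norm_L2 D (wgrad D ?G i) = sq_norm_L2 D (\<lambda>x. a * wgrad D E i x + b * wgrad D E' i x)"
      by (rule sq_norm_cong[OF LG in_L2_comb[OF L1 L2] wgrad_ae[OF D WG[of i]]])
    also have "\<dots> \<le> 2 * (cmod a)\<^sup>2 * sq_norm_L2 D (wgrad D E i) + 2 * (cmod b)\<^sup>2 * sq_norm_L2 D (wgrad D E' i)"
      by (rule sq_norm_comb[OF L1 L2])
    finally show ?thesis .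
  qed
  have "(\<Sum>i\<in>UNIV. sq_norm_L2 D (wgrad D ?G i)) \<le> (\<Sum>i\<in>UNIV. 2 * (cmod a)\<^sup>2 * sq_norm_L2 D (wgrad D E i) + 2 * (cmod b)\<^sup>2 * sq_norm_L2 D (wgrad D E' i))"
    by (rule sum_mono) (rule each)
  also have "\<dots> = 2 * (cmod a)\<^sup>2 * (\<Sum>i\<in>UNIV. sq_norm_L2 D (wgrad D E i)) + 2 * (cmod b)\<^sup>2 * (\<Sum>i\<in>UNIV. sq_norm_L2 D (wgrad D E' i))"
    by (simp add: sum.distrib sum_distrib_left)
  finally have s: "(\<Sum>i\<in>UNIV. sq_norm_L2 D (wgrad D ?G i)) \<le> \<dots>" .
  have l: "sq_norm_L2 D ?G \<le> 2 * (cmod a)\<^sup>2 * sq_norm_L2 D E + 2 * (cmod b)\<^sup>2 * sq_norm_L2 D E'"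
    by (rule sq_norm_comb[OF E E'])
  show ?thesis unfolding H1sq_def using s l by (simp add: algebra_simps)
qed

lemma H10_comb:
  fixes u u' :: "'n::finite cfun" and a b :: complex
  assumes D: "open D" "bounded D" and u: "u \<in> H10 D" and u': "u' \<in> H10 D"
  shows "(\<lambda>x. a * u x + b * u' x) \<in> H10 D"
proof -
  obtain \<psi>s where uH: "in_H1 D u" and \<psi>t: "\<And>n. test_fun D (\<psi>s n)"
      and \<psi>l: "(\<lambda>n. H1norm D (\<lambda>x. u x - \<psi>s n x)) \<longlonglongrightarrow> 0"
    using u unfolding H10_def by blast
  obtain \<psi>s' where uH': "in_H1 D u'" and \<psi>t': "\<And>n. test_fun D (\<psi>s' n)"
      and \<psi>l': "(\<lambda>n. H1norm D (\<lambda>x. u' x - \<psi>s' n x)) \<longlonglongrightarrow> 0"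
    using u' unfolding H10_def by blast
  have uL: "in_L2 D u" and uw: "\<And>i. \<exists>v. weak_deriv D u i v" using uH unfolding in_H1_def by auto
  have uL': "in_L2 D u'" and uw': "\<And>i. \<exists>v. weak_deriv D u' i v" using uH' unfolding in_H1_def by auto
  let ?c = "\<lambda>x. a * u x + b * u' x"
  have cH: "in_H1 D ?c"
    unfolding in_H1_def
  proof (intro conjI allI)
    show "in_L2 D ?c" by (rule in_L2_comb[OF uL uL'])
    fix i
    obtain v where v: "weak_deriv D u i v" using uw by blast
    obtain v' where v': "weak_deriv D u' i v'" using uw' by blast
    show "\<exists>v. weak_deriv D ?c i v" using weak_deriv_comb[OF D uL uL' v v'] by blast
  qed
  define \<chi>s where "\<chi>s = (\<lambda>n x. a * \<psi>s n x + b * \<psi>s' n x)"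
  have \<chi>t: "test_fun D (\<chi>s n)" for n unfolding \<chi>s_def by (rule test_fun_comb[OF \<psi>t \<psi>t'])
  have Eprops: "in_L2 D (\<lambda>x. w x - \<psi> x) \<and> (\<forall>i. \<exists>v. weak_deriv D (\<lambda>x. w x - \<psi> x) i v)"
    if wL: "in_L2 D w" and ww: "\<And>i. \<exists>v. weak_deriv D w i v" and t: "test_fun D \<psi>" for w \<psi>
  proof (intro conjI allI)
    have \<psi>L: "in_L2 D \<psi>" by (rule cont_L2[OF D test_fun_cont[OF t]])
    have eq: "(\<lambda>x. w x - \<psi> x) = (\<lambda>x. 1 * w x + (-1) * \<psi> x)" by simp
    show "in_L2 D (\<lambda>x. w x - \<psi> x)" unfolding eq by (rule in_L2_comb[OF wL \<psi>L])
    fix i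
    obtain v where v: "weak_deriv D w i v" using ww by blast
    show "\<exists>v. weak_deriv D (\<lambda>x. w x - \<psi> x) i v"
      unfolding eq using weak_deriv_comb[OF D wL \<psi>L v test_weak_deriv[OF D t]] by blast
  qed
  have bound: "H1norm D (\<lambda>x. ?c x - \<chi>s n x) \<le> sqrt (2 * (cmod a)\<^sup>2 * (H1norm D (\<lambda>x. u x - \<psi>s n x))\<^sup>2 + 2 * (cmod b)\<^sup>2 * (H1norm D (\<lambda>x. u' x - \<psi>s' n x))\<^sup>2)" for n
  proof -
    let ?E = "\<lambda>x. u x - \<psi>s n x" and ?E' = "\<lambda>x. u' x - \<psi>s' n x"
    have e1: "in_L2 D ?E" "\<And>i. \<exists>v. weak_deriv D ?E i v" using Eprops[OF uL uw \<psi>t] by auto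
    have e2: "in_L2 D ?E'" "\<And>i. \<exists>v. weak_deriv D ?E' i v" using Eprops[OF uL' uw' \<psi>t'] by auto
    have eq: "(\<lambda>x. ?c x - \<chi>s n x) = (\<lambda>x. a * ?E x + b * ?E' x)"
      unfolding \<chi>s_def by (simp add: algebra_simps)
    have "H1sq D (\<lambda>x. ?c x - \<chi>s n x) \<le> 2 * (cmod a)\<^sup>2 * H1sq D ?E + 2 * (cmod b)\<^sup>2 * H1sq D ?E'"
      unfolding eq by (rule H1sq_comb[OF D e1(1) e2(1) e1(2) e2(2)])
    moreover have "(H1norm D ?E)\<^sup>2 = H1sq D ?E" "(H1norm D ?E')\<^sup>2 = H1sq D ?E'"
      unfolding H1norm_sq using H1sq_nonneg by simp_all
    ultimately show ?thesis unfolding H1norm_sq[of D "\<lambda>x. ?c x - \<chi>s n x"]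
      by (simp add: real_sqrt_le_mono)
  qed
  have "(\<lambda>n. sqrt (2 * (cmod a)\<^sup>2 * (H1norm D (\<lambda>x. u x - \<psi>s n x))\<^sup>2 + 2 * (cmod b)\<^sup>2 * (H1norm D (\<lambda>x. u' x - \<psi>s' n x))\<^sup>2))
      \<longlonglongrightarrow> sqrt (2 * (cmod a)\<^sup>2 * 0\<^sup>2 + 2 * (cmod b)\<^sup>2 * 0\<^sup>2)"
    by (intro tendsto_intros \<psi>l \<psi>l')
  then have lim0: "(\<lambda>n. sqrt (2 * (cmod a)\<^sup>2 * (H1norm D (\<lambda>x. u x - \<psi>s n x))\<^sup>2 + 2 * (cmod b)\<^sup>2 * (H1norm D (\<lambda>x. u' x - \<psi>s' n x))\<^sup>2)) \<longlonglongrightarrow> 0"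
    by simp
  have "(\<lambda>n. H1norm D (\<lambda>x. ?c x - \<chi>s n x)) \<longlonglongrightarrow> 0"
  proof (rule real_tendsto_sandwich[OF _ _ tendsto_const lim0])
    show "\<forall>\<^sub>F n in sequentially. 0 \<le> H1norm D (\<lambda>x. ?c x - \<chi>s n x)"
      by (simp add: H1norm_sq H1sq_nonneg)
    show "\<forall>\<^sub>F n in sequentially. H1norm D (\<lambda>x. ?c x - \<chi>s n x) \<le> sqrt (2 * (cmod a)\<^sup>2 * (H1norm D (\<lambda>x. u x - \<psi>s n x))\<^sup>2 + 2 * (cmod b)\<^sup>2 * (H1norm D (\<lambda>x. u' x - \<psi>s' n x))\<^sup>2)"
      using bound by simp
  qed
  then show ?thesis unfolding H10_def using cH \<chi>t by blast
qed

lemma L2ip_scal_left: "L2ip D (\<lambda>x. c * u x) z = c * L2ip D u z"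
  unfolding L2ip_def by (simp add: mult.assoc set_integral_mult_right)

lemma L2ip_self: "L2ip D u u = complex_of_real (sq_norm_L2 D u)"
proof -
  have "L2ip D u u = (LINT x:D|lborel. complex_of_real ((cmod (u x))\<^sup>2))"
    unfolding L2ip_def by (simp only: complex_norm_square)
  also have "\<dots> = complex_of_real (sq_norm_L2 D u)"
    unfolding sq_norm_L2_def by (rule set_integral_complex_of_real)
  finally show ?thesis .
qed

lemma L2ip_cnj: "L2ip D z u = cnj (L2ip D u z)"
proof -
  have "cnj (L2ip D u z) = integral\<^sup>L lborel (\<lambda>x. cnj (indicator D x *\<^sub>R (u x * cnj (z x))))"
    unfolding L2ip_def set_lebesgue_integral_def by (simp only: Bochner_Integration.integral_cnj)
  also have "\<dots> = L2ip D z u"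
    unfolding L2ip_def set_lebesgue_integral_def
    by (rule Bochner_Integration.integral_cong) (auto simp: indicator_def mult.commute)
  finally show ?thesis by simp
qed

lemma L2ip_zero_right: "L2ip D u (\<lambda>x. 0) = 0"
  unfolding L2ip_def by (simp add: set_lebesgue_integral_def)

lemma L2ip_lin2:
  fixes u z w :: "'n::finite cfun"
  assumes u: "in_L2 D u" and z: "in_L2 D z" and w: "in_L2 D w"
  shows "L2ip D u (\<lambda>x. complex_of_real \<alpha> * z x + complex_of_real \<beta> * w x)
       = complex_of_real \<alpha> * L2ip D u z + complex_of_real \<beta> * L2ip D u w"
proof -
  have "L2ip D u (\<lambda>x. complex_of_real \<alpha> * z x + complex_of_real \<beta> * w x)
      = (LINT x:D|lborel. complex_of_real \<alpha> * (u x * cnj (z x)) + complex_of_real \<beta> * (u x * cnj (w x)))"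
    unfolding L2ip_def by (simp add: algebra_simps)
  also have "\<dots> = complex_of_real \<alpha> * L2ip D u z + complex_of_real \<beta> * L2ip D u w"
    unfolding L2ip_def by (rule set_int_comb[OF L2_prod_int[OF u z] L2_prod_int[OF u w]])
  finally show ?thesis .
qed

lemma H10_L2: "u \<in> H10 D \<Longrightarrow> in_L2 D u"
  unfolding H10_def in_H1_def by auto

theorem proposition4p3:
  fixes D :: "(real^'n::finite) set" and p :: nat and N :: "nat \<Rightarrow> real"
    and \<phi> :: "nat \<Rightarrow> 'n cfun" and Gp :: "nat \<Rightarrow> 'n cfun \<Rightarrow> 'n cfun \<Rightarrow> real"
  assumes "CARD('n) = 2 \<or> CARD('n) = 3"
    and "lipschitz_domain D"
    and "p \<ge> 1"
    and "\<forall>j<p. N j > 0"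
    and "\<phi> \<in> OB D p N"
    and "is_product_metric D p \<phi> Gp"
  shows "horizontal_g D p \<phi> Gp = horizontal_L D p \<phi> \<longleftrightarrow>
     (\<forall>j<p. \<exists>s::real. s \<noteq> 0 \<and>
        (\<forall>z\<in>tangentS D (\<phi> j).
           Gp j (\<lambda>x. \<i> * \<phi> j x) z = s * Re (L2ip D (\<lambda>x. \<i> * \<phi> j x) z)))"
proof -
  note lip = assms(2) and p1 = assms(3) and Npos = assms(4) and phiOB = assms(5) and pm = assms(6)
  have D: "open D" "bounded D" using lip unfolding lipschitz_domain_def by auto
  have \<phi>H: "\<phi> j \<in> H10 D" if "j < p" for j using phiOB that unfolding OB_def Hp_def by auto
  have \<phi>N: "sq_norm_L2 D (\<phi> j) = N j" if "j < p" for j using phiOB that unfolding OB_def sphereS_def by auto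
  have lin: "H10_to_Hm1_linear D (Gp j)" if "j < p" for j using pm that unfolding is_product_metric_def by auto
  have sym: "\<And>y z. y \<in> tangentOB D p \<phi> \<Longrightarrow> z \<in> tangentOB D p \<phi> \<Longrightarrow> prod_metric p Gp y z = prod_metric p Gp z y"
    using pm unfolding is_product_metric_def by auto
  have posdef: "\<And>\<xi>. \<xi> \<in> tangentOB D p \<phi> \<Longrightarrow> (\<exists>j<p. sq_norm_L2 D (\<xi> j) \<noteq> 0) \<Longrightarrow> prod_metric p Gp \<xi> \<xi> > 0"
    using pm unfolding is_product_metric_def by auto
  have H0: "\<phi> 0 \<in> H10 D" using \<phi>H p1 by simp
  have zeroH: "(\<lambda>x. 0) \<in> H10 D" using H10_comb[OF D H0 H0, of 0 0] by simp
  have scalH: "(\<lambda>x. c * u x) \<in> H10 D" if "u \<in> H10 D" for c u using H10_comb[OF D that that, of c 0] by simp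
  define \<iota> where "\<iota> = (\<lambda>j x. \<i> * \<phi> j x)"
  have \<iota>H: "\<iota> j \<in> H10 D" if "j < p" for j unfolding \<iota>_def by (rule scalH[OF \<phi>H[OF that]])
  have G1: "Gp j (\<lambda>x. complex_of_real a * y x + complex_of_real b * y' x) z = a * Gp j y z + b * Gp j y' z"
    if "j < p" "y \<in> H10 D" "y' \<in> H10 D" "z \<in> H10 D" for j a b y y' z
    using lin[OF that(1)] that(2-4) unfolding H10_to_Hm1_linear_def by blast
  have G2: "Gp j y (\<lambda>x. complex_of_real a * z x + complex_of_real b * z' x) = a * Gp j y z + b * Gp j y z'"
    if "j < p" "y \<in> H10 D" "z \<in> H10 D" "z' \<in> H10 D" for j a b y z z'
    using lin[OF that(1)] that(2-4) unfolding H10_to_Hm1_linear_def by blast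
  have Gzr: "Gp j y (\<lambda>x. 0) = 0" if "j < p" "y \<in> H10 D" for j y
    using G2[OF that zeroH zeroH, of 0 0] by simp
  have Gzl: "Gp j (\<lambda>x. 0) z = 0" if "j < p" "z \<in> H10 D" for j z
    using G1[OF that(1) zeroH zeroH that(2), of 0 0] by simp
  have Gsr: "Gp j y (\<lambda>x. z x * complex_of_real s) = s * Gp j y z" if "j < p" "y \<in> H10 D" "z \<in> H10 D" for j y z s
    using G2[OF that that(3), of s 0] by (simp add: mult.commute)
  have L\<phi>\<phi>: "L2ip D (\<phi> j) (\<phi> j) = complex_of_real (N j)" if "j < p" for j
    using L2ip_self[of D "\<phi> j"] \<phi>N[OF that] by simp
  have T0: "(\<lambda>x. 0) \<in> tangentS D (\<phi> j)" for j
    unfolding tangentS_def L2ip_def using zeroH by (simp add: set_lebesgue_integral_def)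
  have Tsc: "(\<lambda>x. c * \<phi> j x) \<in> tangentS D (\<phi> j)" if "j < p" "Re c = 0" for j c
  proof -
    have "L2ip D (\<lambda>x. c * \<phi> j x) (\<phi> j) = c * complex_of_real (N j)"
      using L2ip_scal_left[of D c "\<phi> j" "\<phi> j"] L\<phi>\<phi>[OF that(1)] by simp
    then show ?thesis unfolding tangentS_def using scalH[OF \<phi>H[OF that(1)]] that(2) by simp
  qed
  have \<iota>T: "\<iota> j \<in> tangentS D (\<phi> j)" if "j < p" for j
    unfolding \<iota>_def by (rule Tsc[OF that]) simp
  have vT: "(\<lambda>x. \<i> * \<phi> j x * complex_of_real s) \<in> tangentS D (\<phi> j)" if "j < p" for j s
  proof -
    have "(\<lambda>x. \<i> * \<phi> j x * complex_of_real s) = (\<lambda>x. (\<i> * complex_of_real s) * \<phi> j x)"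
      by (simp add: algebra_simps)
    then show ?thesis using Tsc[OF that, of "\<i> * complex_of_real s"] by simp
  qed
  have TH: "z \<in> tangentS D (\<phi> j) \<Longrightarrow> z \<in> H10 D" for z j unfolding tangentS_def by simp
  define sg where "sg = (\<lambda>(j::nat) (z::'n cfun) (k::nat). if k = j then z else (\<lambda>x. 0))"
  have sgHp: "sg j z \<in> Hp D p" if "j < p" "z \<in> H10 D" for j z
    unfolding Hp_def sg_def using that zeroH by auto
  have sgT: "sg j z \<in> tangentOB D p \<phi>" if "j < p" "z \<in> tangentS D (\<phi> j)" for j z
    unfolding tangentOB_def using sgHp[OF that(1) TH[OF that(2)]] that T0 by (auto simp: sg_def)
  have pm_sg: "prod_metric p Gp (sg j y) (sg j z) = Gp j y z" if "j < p" "y \<in> H10 D" "z \<in> H10 D" for j y z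
  proof -
    have "prod_metric p Gp (sg j y) (sg j z) = Gp j y z + (\<Sum>k\<in>{..<p} - {j}. Gp k (sg j y k) (sg j z k))"
      unfolding prod_metric_def using that(1) by (subst sum.remove[of _ j]) (auto simp: sg_def)
    also have "(\<Sum>k\<in>{..<p} - {j}. Gp k (sg j y k) (sg j z k)) = 0"
      by (rule sum.neutral) (auto simp: sg_def Gzl zeroH)
    finally show ?thesis by simp
  qed
  have SYM: "Gp j z (\<iota> j) = Gp j (\<iota> j) z" if "j < p" "z \<in> tangentS D (\<phi> j)" for j z
    using pm_sg[OF that(1) TH[OF that(2)] \<iota>H[OF that(1)]] pm_sg[OF that(1) \<iota>H[OF that(1)] TH[OF that(2)]]
      sym[OF sgT[OF that] sgT[OF that(1) \<iota>T[OF that(1)]]] by simp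
  have POS: "Gp j (\<iota> j) (\<iota> j) > 0" if "j < p" for j
  proof -
    have "sq_norm_L2 D (\<iota> j) = N j" unfolding \<iota>_def sq_norm_L2_def using \<phi>N[OF that]
      by (simp add: norm_mult sq_norm_L2_def)
    then have "sq_norm_L2 D (sg j (\<iota> j) j) \<noteq> 0" using Npos that by (simp add: sg_def) (metis less_irrefl)
    then have "prod_metric p Gp (sg j (\<iota> j)) (sg j (\<iota> j)) > 0"
      using posdef[OF sgT[OF that \<iota>T[OF that]]] that by blast
    then show ?thesis using pm_sg[OF that \<iota>H[OF that] \<iota>H[OF that]] by simp
  qed
  define vs where "vs = (\<lambda>\<sigma>::nat \<Rightarrow> real. (\<lambda>k. if k < p then (\<lambda>x. \<i> * \<phi> k x * complex_of_real (\<sigma> k)) else (\<lambda>x. 0)))"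
  have vert: "vertical p \<phi> = range vs" unfolding vertical_def vs_def by auto
  have pm_vs: "prod_metric p Gp \<xi> (vs \<sigma>) = (\<Sum>k<p. \<sigma> k * Gp k (\<xi> k) (\<iota> k))" if "\<xi> \<in> Hp D p" for \<xi> \<sigma>
    unfolding prod_metric_def
  proof (rule sum.cong[OF refl])
    fix k assume k: "k \<in> {..<p}"
    have "vs \<sigma> k = (\<lambda>x. \<iota> k x * complex_of_real (\<sigma> k))" using k unfolding vs_def \<iota>_def by simp
    moreover have "\<xi> k \<in> H10 D" using that k unfolding Hp_def by auto
    ultimately show "Gp k (\<xi> k) (vs \<sigma> k) = \<sigma> k * Gp k (\<xi> k) (\<iota> k)"
      using Gsr[of k "\<xi> k" "\<iota> k" "\<sigma> k"] \<iota>H k by simp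
  qed
  have TOB_Hp: "\<xi> \<in> tangentOB D p \<phi> \<Longrightarrow> \<xi> \<in> Hp D p" for \<xi> unfolding tangentOB_def by simp
  have HGchar: "horizontal_g D p \<phi> Gp = {\<xi> \<in> tangentOB D p \<phi>. \<forall>k<p. Gp k (\<xi> k) (\<iota> k) = 0}"
  proof (rule set_eqI, rule iffI)
    fix \<xi> assume h: "\<xi> \<in> horizontal_g D p \<phi> Gp"
    then have t: "\<xi> \<in> tangentOB D p \<phi>" and o: "\<And>\<nu>. \<nu> \<in> vertical p \<phi> \<Longrightarrow> prod_metric p Gp \<xi> \<nu> = 0"
      unfolding horizontal_g_def by auto
    have "Gp k (\<xi> k) (\<iota> k) = 0" if k: "k < p" for k
    proof -
      let ?\<sigma> = "\<lambda>m. if m = k then 1 else (0::real)"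
      have "prod_metric p Gp \<xi> (vs ?\<sigma>) = 0" using o vert by auto
      moreover have "prod_metric p Gp \<xi> (vs ?\<sigma>) = Gp k (\<xi> k) (\<iota> k)"
        unfolding pm_vs[OF TOB_Hp[OF t]] using k by (subst sum.remove[of _ k]) auto
      ultimately show ?thesis by simp
    qed
    with t show "\<xi> \<in> {\<xi> \<in> tangentOB D p \<phi>. \<forall>k<p. Gp k (\<xi> k) (\<iota> k) = 0}" by blast
  next
    fix \<xi> assume "\<xi> \<in> {\<xi> \<in> tangentOB D p \<phi>. \<forall>k<p. Gp k (\<xi> k) (\<iota> k) = 0}"
    then have t: "\<xi> \<in> tangentOB D p \<phi>" and z: "\<forall>k<p. Gp k (\<xi> k) (\<iota> k) = 0" by auto
    have "prod_metric p Gp \<xi> \<nu> = 0" if nu: "\<nu> \<in> vertical p \<phi>" for \<nu>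
    proof -
      obtain \<sigma> where "\<nu> = vs \<sigma>" using nu vert by auto
      then show ?thesis using pm_vs[OF TOB_Hp[OF t]] z by simp
    qed
    with t show "\<xi> \<in> horizontal_g D p \<phi> Gp" unfolding horizontal_g_def by blast
  qed
  have HLdef: "horizontal_L D p \<phi> = {\<xi> \<in> Hp D p. \<forall>j<p. L2ip D (\<phi> j) (\<xi> j) = 0}"
    unfolding horizontal_L_def ..
  have L\<iota>: "L2ip D (\<iota> j) z = \<i> * L2ip D (\<phi> j) z" for j z
    unfolding \<iota>_def by (rule L2ip_scal_left)
  have key: "L2ip D (\<phi> j) z = 0 \<longleftrightarrow> Re (L2ip D z (\<phi> j)) = 0 \<and> Re (L2ip D (\<iota> j) z) = 0" for j z
    unfolding L\<iota> L2ip_cnj[of D z] by (simp add: complex_eq_iff)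
  have tanS: "z \<in> tangentS D (\<phi> j) \<longleftrightarrow> z \<in> H10 D \<and> Re (L2ip D z (\<phi> j)) = 0" for j z
    unfolding tangentS_def by simp
  have main: "horizontal_g D p \<phi> Gp = horizontal_L D p \<phi> \<longleftrightarrow>
     (\<forall>j<p. \<exists>s::real. s \<noteq> 0 \<and> (\<forall>z\<in>tangentS D (\<phi> j). Gp j (\<iota> j) z = s * Re (L2ip D (\<iota> j) z)))"
  proof
    assume EQ: "horizontal_g D p \<phi> Gp = horizontal_L D p \<phi>"
    show "\<forall>j<p. \<exists>s::real. s \<noteq> 0 \<and> (\<forall>z\<in>tangentS D (\<phi> j). Gp j (\<iota> j) z = s * Re (L2ip D (\<iota> j) z))"
    proof (intro allI impI)
      fix j assume j: "j < p"
      have Nj: "N j > 0" using Npos j by simp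
      define s where "s = Gp j (\<iota> j) (\<iota> j) / N j"
      have s0: "s \<noteq> 0" unfolding s_def using POS[OF j] Nj by simp
      have "Gp j (\<iota> j) z = s * Re (L2ip D (\<iota> j) z)" if zT: "z \<in> tangentS D (\<phi> j)" for z
      proof -
        have zH: "z \<in> H10 D" using zT tanS by blast
        have zRe: "Re (L2ip D z (\<phi> j)) = 0" using zT tanS by blast
        define l where "l = Re (L2ip D (\<iota> j) z)"
        define t where "t = l / N j"
        define z' where "z' = (\<lambda>x. complex_of_real 1 * z x + complex_of_real (- t) * \<iota> j x)"
        have z'H: "z' \<in> H10 D" unfolding z'_def by (rule H10_comb[OF D zH \<iota>H[OF j]])
        have L\<phi>\<iota>: "L2ip D (\<phi> j) (\<iota> j) = - \<i> * complex_of_real (N j)"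
          using L2ip_cnj[of D "\<phi> j" "\<iota> j"] L\<iota>[of j "\<phi> j"] L\<phi>\<phi>[OF j] by simp
        have "L2ip D (\<phi> j) z' = complex_of_real 1 * L2ip D (\<phi> j) z + complex_of_real (- t) * L2ip D (\<phi> j) (\<iota> j)"
          unfolding z'_def by (rule L2ip_lin2[OF H10_L2[OF \<phi>H[OF j]] H10_L2[OF zH] H10_L2[OF \<iota>H[OF j]]])
        also have "\<dots> = L2ip D (\<phi> j) z + \<i> * complex_of_real (t * N j)"
          unfolding L\<phi>\<iota> by simp
        also have "t * N j = l" unfolding t_def using Nj by simp
        finally have Lz': "L2ip D (\<phi> j) z' = L2ip D (\<phi> j) z + \<i> * complex_of_real l" .
        have "Re (L2ip D (\<phi> j) z) = 0" using zRe L2ip_cnj[of D z "\<phi> j"] by simp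
        moreover have "l = - Im (L2ip D (\<phi> j) z)" unfolding l_def L\<iota> by simp
        ultimately have L0: "L2ip D (\<phi> j) z' = 0" unfolding Lz' by (simp add: complex_eq_iff)
        have "sg j z' \<in> horizontal_L D p \<phi>"
          unfolding HLdef using sgHp[OF j z'H] L0 by (auto simp: sg_def L2ip_zero_right)
        then have "sg j z' \<in> horizontal_g D p \<phi> Gp" using EQ by simp
        then have "Gp j z' (\<iota> j) = 0" unfolding HGchar using j by (auto simp: sg_def)
        moreover have "Gp j z' (\<iota> j) = 1 * Gp j z (\<iota> j) + (- t) * Gp j (\<iota> j) (\<iota> j)"
          unfolding z'_def by (rule G1[OF j zH \<iota>H[OF j] \<iota>H[OF j]])
        ultimately have "Gp j z (\<iota> j) = t * Gp j (\<iota> j) (\<iota> j)" by simp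
        then have "Gp j (\<iota> j) z = t * Gp j (\<iota> j) (\<iota> j)" using SYM[OF j zT] by simp
        also have "\<dots> = s * l" unfolding t_def s_def using Nj by simp
        finally show ?thesis unfolding l_def .
      qed
      then show "\<exists>s::real. s \<noteq> 0 \<and> (\<forall>z\<in>tangentS D (\<phi> j). Gp j (\<iota> j) z = s * Re (L2ip D (\<iota> j) z))"
        using s0 by blast
    qed
  next
    assume R: "\<forall>j<p. \<exists>s::real. s \<noteq> 0 \<and> (\<forall>z\<in>tangentS D (\<phi> j). Gp j (\<iota> j) z = s * Re (L2ip D (\<iota> j) z))"
    show "horizontal_g D p \<phi> Gp = horizontal_L D p \<phi>"
      unfolding HGchar HLdef
    proof (rule set_eqI, rule iffI)
      fix \<xi> assume "\<xi> \<in> {\<xi> \<in> tangentOB D p \<phi>. \<forall>k<p. Gp k (\<xi> k) (\<iota> k) = 0}"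
      then have t: "\<xi> \<in> tangentOB D p \<phi>" and z: "\<And>k. k < p \<Longrightarrow> Gp k (\<xi> k) (\<iota> k) = 0" by auto
      have Hp: "\<xi> \<in> Hp D p" using t by (rule TOB_Hp)
      have "L2ip D (\<phi> k) (\<xi> k) = 0" if k: "k < p" for k
      proof -
        have kT: "\<xi> k \<in> tangentS D (\<phi> k)" using t k unfolding tangentOB_def by auto
        obtain s where s: "s \<noteq> 0" "\<forall>z\<in>tangentS D (\<phi> k). Gp k (\<iota> k) z = s * Re (L2ip D (\<iota> k) z)"
          using R k by blast
        have "s * Re (L2ip D (\<iota> k) (\<xi> k)) = 0" using s(2) kT SYM[OF k kT] z[OF k] by simp
        then have "Re (L2ip D (\<iota> k) (\<xi> k)) = 0" using s(1) by simp
        moreover have "Re (L2ip D (\<xi> k) (\<phi> k)) = 0" using kT tanS by blast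
        ultimately show ?thesis using key by blast
      qed
      with Hp show "\<xi> \<in> {\<xi> \<in> Hp D p. \<forall>j<p. L2ip D (\<phi> j) (\<xi> j) = 0}" by blast
    next
      fix \<xi> assume "\<xi> \<in> {\<xi> \<in> Hp D p. \<forall>j<p. L2ip D (\<phi> j) (\<xi> j) = 0}"
      then have Hp: "\<xi> \<in> Hp D p" and z: "\<And>k. k < p \<Longrightarrow> L2ip D (\<phi> k) (\<xi> k) = 0" by auto
      have kH: "\<xi> k \<in> H10 D" if "k < p" for k using Hp that unfolding Hp_def by auto
      have kT: "\<xi> k \<in> tangentS D (\<phi> k)" if k: "k < p" for k
        using tanS kH[OF k] z[OF k] key by blast
      have t: "\<xi> \<in> tangentOB D p \<phi>" unfolding tangentOB_def using Hp kT by blast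
      have "Gp k (\<xi> k) (\<iota> k) = 0" if k: "k < p" for k
      proof -
        obtain s where s: "s \<noteq> 0" "\<forall>z\<in>tangentS D (\<phi> k). Gp k (\<iota> k) z = s * Re (L2ip D (\<iota> k) z)"
          using R k by blast
        have "Re (L2ip D (\<iota> k) (\<xi> k)) = 0" using z[OF k] key by blast
        then show ?thesis using s(2) kT[OF k] SYM[OF k kT[OF k]] by simp
      qed
      with t show "\<xi> \<in> {\<xi> \<in> tangentOB D p \<phi>. \<forall>k<p. Gp k (\<xi> k) (\<iota> k) = 0}" by blast
    qed
  qed
  then show ?thesis unfolding \<iota>_def .
qed

end
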